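(* Let $Y$ be a finite connected simple undirected graph on $n$ vertices and $e=\{v,w\}$ a cycle-edge of $Y$. Let $Y'$ be $Y$ with $e$ deleted and $Y''$ be $Y$ with $e$ contracted. Define $\Theta\colon\mathsf{Acyc}(Y)/\!\sim_\kappa\to\big(\mathsf{Acyc}(Y')/\!\sim_\kappa\big)\sqcup\big(\mathsf{Acyc}(Y'')/\!\sim_\kappa\big)$ as follows: if the class $[O_Y]$ contains an orientation $O^\pi_Y$ with $\pi=(v,w,\pi_3,\dots,\pi_n)$, then $\Theta([O_Y])$ is the $\kappa$-class in $Y''$ of the induced orientation $O^\pi_{Y''}$; otherwise $\Theta([O_Y])$ is the $\kappa$-class in $Y'$ of the restriction $O_{Y'}$ of any element $O_Y$ of the class. Then $\Theta$ is a bijection.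
   Context: A cycle-edge is an edge whose removal does not disconnect its component. $Y''$ is the simple graph obtained by identifying $v$ and $w$ into one vertex, removing $e$ and identifying parallel edges. $\mathsf{Acyc}(Z)$ denotes the set of acyclic orientations of a graph $Z$. For a permutation $\pi=(\pi_1,\dots,\pi_n)$ of the vertices, $O^\pi_Y$ is the acyclic orientation with each edge $\{i,j\}$ directed $(i,j)$ iff $i$ precedes $j$ in $\pi$; when $\pi$ starts with $v,w$, $O^\pi_{Y''}$ is the induced acyclic orientation of $Y''$ (edges keep their orientation). A click at a vertex $x$ which is a source reverses all edges incident to $x$; two acyclic orientations of a graph are $\kappa$-equivalent if one can be transformed into the other by a finite sequence of clicks, and $\mathsf{Acyc}(Z)/\!\sim_\kappa$ is the set of $\kappa$-classes. *)

theory Defs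
  imports Main
begin

definition simple_graph :: "'a set \<Rightarrow> 'a set set \<Rightarrow> bool" where
  "simple_graph V E \<longleftrightarrow> finite V \<and>
     (\<forall>f\<in>E. \<exists>a b. f = {a, b} \<and> a \<noteq> b \<and> a \<in> V \<and> b \<in> V)"

definition adj :: "'a set set \<Rightarrow> ('a \<times> 'a) set" where
  "adj E = {(a, b). {a, b} \<in> E}"

definition connected_graph :: "'a set \<Rightarrow> 'a set set \<Rightarrow> bool" where
  "connected_graph V E \<longleftrightarrow> V \<noteq> {} \<and> (\<forall>a\<in>V. \<forall>b\<in>V. (a, b) \<in> (adj E)\<^sup>*)"

definition cycle_edge :: "'a set set \<Rightarrow> 'a set \<Rightarrow> bool" where
  "cycle_edge E e \<longleftrightarrow> e \<in> E \<and> (\<forall>a b. e = {a, b} \<longrightarrow> (a, b) \<in> (adj (E - {e}))\<^sup>*)"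

definition is_orientation :: "'a set set \<Rightarrow> ('a \<times> 'a) set \<Rightarrow> bool" where
  "is_orientation E Ori \<longleftrightarrow> (\<forall>(a, b)\<in>Ori. {a, b} \<in> E) \<and>
     (\<forall>a b. {a, b} \<in> E \<longrightarrow> ((a, b) \<in> Ori \<longleftrightarrow> (b, a) \<notin> Ori))"

definition Acyc :: "'a set set \<Rightarrow> ('a \<times> 'a) set set" where
  "Acyc E = {Ori. is_orientation E Ori \<and> acyclic Ori}"

definition is_source :: "('a \<times> 'a) set \<Rightarrow> 'a \<Rightarrow> bool" where
  "is_source Ori x \<longleftrightarrow> (\<forall>y. (y, x) \<notin> Ori)"

definition click :: "('a \<times> 'a) set \<Rightarrow> 'a \<Rightarrow> ('a \<times> 'a) set" where
  "click Ori x = {(a, b). ((a, b) \<in> Ori \<and> a \<noteq> x \<and> b \<noteq> x) \<or> ((b, a) \<in> Ori \<and> (a = x \<or> b = x))}"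

definition click_rel :: "'a set \<Rightarrow> 'a set set \<Rightarrow> (('a \<times> 'a) set \<times> ('a \<times> 'a) set) set" where
  "click_rel V E = {(Ori, click Ori x) | Ori x. Ori \<in> Acyc E \<and> x \<in> V \<and> is_source Ori x}"

definition kappa_rel :: "'a set \<Rightarrow> 'a set set \<Rightarrow> (('a \<times> 'a) set \<times> ('a \<times> 'a) set) set" where
  "kappa_rel V E = Restr ((click_rel V E)\<^sup>*) (Acyc E)"

definition kappa_classes :: "'a set \<Rightarrow> 'a set set \<Rightarrow> ('a \<times> 'a) set set set" where
  "kappa_classes V E = Acyc E // kappa_rel V E"

definition kappa_class :: "'a set \<Rightarrow> 'a set set \<Rightarrow> ('a \<times> 'a) set \<Rightarrow> ('a \<times> 'a) set set" where
  "kappa_class V E Ori = kappa_rel V E `` {Ori}"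

definition is_perm :: "'a set \<Rightarrow> 'a list \<Rightarrow> bool" where
  "is_perm V \<pi> \<longleftrightarrow> distinct \<pi> \<and> set \<pi> = V"

definition perm_orient :: "'a set set \<Rightarrow> 'a list \<Rightarrow> ('a \<times> 'a) set" where
  "perm_orient E \<pi> = {(a, b). {a, b} \<in> E \<and>
      (\<exists>i j. i < j \<and> j < length \<pi> \<and> \<pi> ! i = a \<and> \<pi> ! j = b)}"

text \<open>Contraction of e = {v,w}: w is identified with v.\<close>
definition cmap :: "'a \<Rightarrow> 'a \<Rightarrow> 'a \<Rightarrow> 'a" where
  "cmap v w x = (if x = w then v else x)"

definition contract_vertices :: "'a set \<Rightarrow> 'a \<Rightarrow> 'a \<Rightarrow> 'a set" where
  "contract_vertices V v w = V - {w}"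

definition contract_edges :: "'a set set \<Rightarrow> 'a \<Rightarrow> 'a \<Rightarrow> 'a set set" where
  "contract_edges E v w = {cmap v w ` f | f. f \<in> E \<and> f \<noteq> {v, w}}"

definition contract_orient :: "'a \<Rightarrow> 'a \<Rightarrow> ('a \<times> 'a) set \<Rightarrow> ('a \<times> 'a) set" where
  "contract_orient v w Ori = {(cmap v w a, cmap v w b) | a b. (a, b) \<in> Ori \<and> {a, b} \<noteq> {v, w}}"

definition delete_orient :: "'a \<Rightarrow> 'a \<Rightarrow> ('a \<times> 'a) set \<Rightarrow> ('a \<times> 'a) set" where
  "delete_orient v w Ori = Ori - {(v, w), (w, v)}"

definition starts_vw :: "'a set \<Rightarrow> 'a \<Rightarrow> 'a \<Rightarrow> 'a list \<Rightarrow> bool" where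
  "starts_vw V v w \<pi> \<longleftrightarrow> is_perm V \<pi> \<and> (\<exists>rest. \<pi> = v # w # rest)"

definition Theta :: "'a set \<Rightarrow> 'a set set \<Rightarrow> 'a \<Rightarrow> 'a \<Rightarrow> ('a \<times> 'a) set set
     \<Rightarrow> ('a \<times> 'a) set set + ('a \<times> 'a) set set" where
  "Theta V E v w C =
     (if \<exists>\<pi>. starts_vw V v w \<pi> \<and> perm_orient E \<pi> \<in> C
      then Inr (kappa_class (contract_vertices V v w) (contract_edges E v w)
                  (contract_orient v w (perm_orient E (SOME \<pi>. starts_vw V v w \<pi> \<and> perm_orient E \<pi> \<in> C))))
      else Inl (kappa_class V (E - {{v, w}}) (delete_orient v w (SOME Ori. Ori \<in> C))))"

end

theory Submission
  imports Defs
begin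

lemma min_elem:
  assumes "finite S" "acyclic R" "S \<noteq> {}"
  shows "\<exists>m\<in>S. \<forall>y\<in>S. (y, m) \<notin> R"
proof -
  let ?R = "R \<inter> (S \<times> S)"
  have "finite ?R" using assms(1) by auto
  moreover have "acyclic ?R" using assms(2) acyclic_subset by blast
  ultimately have "wf ?R" by (rule finite_acyclic_wf)
  then obtain x where "x \<in> S" using assms(3) by auto
  from \<open>wf ?R\<close>[unfolded wf_eq_minimal, rule_format, OF this]
  show ?thesis by blast
qed

lemma acyc_root:
  assumes "acyclic Q" "\<forall>a. (a, r) \<notin> R" "\<forall>a b. (a, b) \<in> R \<longrightarrow> a \<noteq> r \<longrightarrow> (a, b) \<in> Q"
  shows "acyclic R"
proof -
  have *: "b \<noteq> r \<and> (a \<noteq> r \<longrightarrow> (a, b) \<in> Q\<^sup>+)" if "(a, b) \<in> R\<^sup>+" for a b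
    using that
  proof (induction rule: trancl_induct)
    case (base y)
    then show ?case using assms by blast
  next
    case (step y z)
    then show ?case using assms
      by (metis trancl.simps)
  qed
  show ?thesis unfolding acyclic_def
  proof
    fix x show "(x, x) \<notin> R\<^sup>+"
    proof
      assume "(x, x) \<in> R\<^sup>+"
      with * have "(x, x) \<in> Q\<^sup>+" by blast
      with assms(1) show False unfolding acyclic_def by blast
    qed
  qed
qed

lemma acyc_sink:
  assumes "acyclic Q" "\<forall>b. (r, b) \<notin> R" "\<forall>a b. (a, b) \<in> R \<longrightarrow> b \<noteq> r \<longrightarrow> (a, b) \<in> Q"
  shows "acyclic R"
proof -
  have "acyclic (R\<inverse>)"
    by (rule acyc_root[of "Q\<inverse>" r]) (use assms in auto)
  then show ?thesis by simp
qed


lemma sg_edge: "simple_graph V E \<Longrightarrow> {a, b} \<in> E \<Longrightarrow> a \<noteq> b \<and> a \<in> V \<and> b \<in> V"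
proof -
  assume "simple_graph V E" "{a, b} \<in> E"
  then obtain c d where "{a, b} = {c, d}" "c \<noteq> d" "c \<in> V" "d \<in> V"
    unfolding simple_graph_def by blast
  then show ?thesis by (auto simp: doubleton_eq_iff)
qed

lemma sg_finite: "simple_graph V E \<Longrightarrow> finite V"
  unfolding simple_graph_def by blast

lemma ori_arc: "is_orientation E Q \<Longrightarrow> (a, b) \<in> Q \<Longrightarrow> {a, b} \<in> E"
  unfolding is_orientation_def by blast

lemma ori_iff: "is_orientation E Q \<Longrightarrow> {a, b} \<in> E \<Longrightarrow> (a, b) \<in> Q \<longleftrightarrow> (b, a) \<notin> Q"
  unfolding is_orientation_def by blast

lemma acyc_irrefl: "acyclic Q \<Longrightarrow> (a, a) \<notin> Q"
  unfolding acyclic_def by blast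

lemma AcycD: "Q \<in> Acyc E \<Longrightarrow> is_orientation E Q \<and> acyclic Q"
  unfolding Acyc_def by blast

lemma AcycI: "is_orientation E Q \<Longrightarrow> acyclic Q \<Longrightarrow> Q \<in> Acyc E"
  unfolding Acyc_def by blast

lemma arc_V: "simple_graph V E \<Longrightarrow> Q \<in> Acyc E \<Longrightarrow> (a, b) \<in> Q \<Longrightarrow> a \<in> V \<and> b \<in> V \<and> a \<noteq> b"
  using sg_edge ori_arc AcycD by metis

lemma click_ori:
  assumes "simple_graph V E" "Q \<in> Acyc E" "is_source Q x"
  shows "is_orientation E (click Q x)"
proof -
  have o: "is_orientation E Q" using assms AcycD by blast
  show ?thesis unfolding is_orientation_def
  proof (intro conjI allI impI ballI)
    fix p assume "p \<in> click Q x"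
    then obtain a b where p: "p = (a, b)" and "(a, b) \<in> Q \<or> (b, a) \<in> Q"
      unfolding click_def by auto
    then have "{a, b} \<in> E" using ori_arc[OF o] by (metis insert_commute)
    then show "case p of (a, b) \<Rightarrow> {a, b} \<in> E" using p by simp
  next
    fix a b assume e: "{a, b} \<in> E"
    have e2: "{b, a} \<in> E" using e by (metis insert_commute)
    have "a \<noteq> b" using sg_edge[OF assms(1) e] by blast
    then show "(a, b) \<in> click Q x \<longleftrightarrow> (b, a) \<notin> click Q x"
      using ori_iff[OF o e] ori_iff[OF o e2] unfolding click_def by auto
  qed
qed

lemma click_Acyc:
  assumes "simple_graph V E" "Q \<in> Acyc E" "is_source Q x"
  shows "click Q x \<in> Acyc E"
proof (rule AcycI)
  show "is_orientation E (click Q x)" by (rule click_ori[OF assms])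
  show "acyclic (click Q x)"
  proof (rule acyc_sink[of Q x])
    show "acyclic Q" using assms AcycD by blast
    show "\<forall>b. (x, b) \<notin> click Q x" using assms(3) unfolding click_def is_source_def by auto
    show "\<forall>a b. (a, b) \<in> click Q x \<longrightarrow> b \<noteq> x \<longrightarrow> (a, b) \<in> Q"
      using assms(3) unfolding click_def is_source_def by auto
  qed
qed

lemma click_click: "click (click Q x) x = Q"
  unfolding click_def by auto

definition clickS :: "'a set \<Rightarrow> 'a set set \<Rightarrow> 'a set \<Rightarrow> (('a \<times> 'a) set \<times> ('a \<times> 'a) set) set" where
  "clickS V E S = {(Q, click Q x) | Q x. Q \<in> Acyc E \<and> x \<in> S \<and> is_source Q x}"

lemma click_rel_S: "click_rel V E = clickS V E V"
  unfolding click_rel_def clickS_def by simp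

lemma clickS_mono: "S \<subseteq> T \<Longrightarrow> clickS V E S \<subseteq> clickS V E T"
  unfolding clickS_def by blast

lemma clickS_Acyc: "simple_graph V E \<Longrightarrow> (P, Q) \<in> clickS V E S \<Longrightarrow> P \<in> Acyc E \<and> Q \<in> Acyc E"
  unfolding clickS_def using click_Acyc[of V E] by auto

lemma clickS_rtrancl_Acyc:
  assumes "simple_graph V E" "(P, Q) \<in> (clickS V E S)\<^sup>*" "P \<in> Acyc E"
  shows "Q \<in> Acyc E"
  using assms(2)
proof (induction rule: rtrancl_induct)
  case base
  then show ?case using assms(3) .
next
  case (step y z)
  then show ?case using clickS_Acyc[OF assms(1), of y z S] by simp
qed

definition flip :: "('a \<times> 'a) set \<Rightarrow> 'a set \<Rightarrow> ('a \<times> 'a) set" where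
  "flip Q S = {(a, b). ((a, b) \<in> Q \<and> (a \<in> S \<longleftrightarrow> b \<in> S)) \<or> ((b, a) \<in> Q \<and> \<not> (a \<in> S \<longleftrightarrow> b \<in> S))}"

lemma flip_lemma:
  assumes "simple_graph V E"
  shows "finite S \<Longrightarrow> S \<subseteq> V \<Longrightarrow> Q \<in> Acyc E \<Longrightarrow> (\<forall>a b. (a, b) \<in> Q \<longrightarrow> b \<in> S \<longrightarrow> a \<in> S)
     \<Longrightarrow> (Q, flip Q S) \<in> (clickS V E V)\<^sup>*"
proof (induction "card S" arbitrary: S Q)
  case 0
  then have "S = {}" by simp
  then have "flip Q S = Q" unfolding flip_def by auto
  then show ?case by simp
next
  case (Suc n)
  then have "S \<noteq> {}" by auto
  moreover have "acyclic Q" using Suc.prems AcycD by blast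
  ultimately obtain s where s: "s \<in> S" "\<forall>y\<in>S. (y, s) \<notin> Q"
    using min_elem[OF Suc.prems(1)] by blast
  have src: "is_source Q s" unfolding is_source_def using s Suc.prems(4) by blast
  define Q1 where "Q1 = click Q s"
  have Q1A: "Q1 \<in> Acyc E" unfolding Q1_def by (rule click_Acyc[OF assms Suc.prems(3) src])
  have step: "(Q, Q1) \<in> clickS V E V" unfolding clickS_def Q1_def
    using Suc.prems(2,3) s(1) src by blast
  have cl: "\<forall>a b. (a, b) \<in> Q1 \<longrightarrow> b \<in> S - {s} \<longrightarrow> a \<in> S - {s}"
    using Suc.prems(4) s unfolding Q1_def click_def by auto
  have "(Q1, flip Q1 (S - {s})) \<in> (clickS V E V)\<^sup>*"
    using Suc.hyps(1)[of "S - {s}" Q1] Suc.hyps(2) Suc.prems s(1) Q1A cl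
    by (metis Diff_subset card_Diff_singleton diff_Suc_1 finite_Diff subset_trans)
  moreover have "flip Q1 (S - {s}) = flip Q S"
  proof (rule set_eqI, clarify)
    fix a b
    show "(a, b) \<in> flip Q1 (S - {s}) \<longleftrightarrow> (a, b) \<in> flip Q S"
      unfolding Q1_def flip_def click_def using s(1) by (cases "a = s"; cases "b = s") auto
  qed
  ultimately show ?case using step by (metis converse_rtrancl_into_rtrancl)
qed

lemma click_back:
  assumes "simple_graph V E" "Q \<in> Acyc E" "x \<in> V" "is_source Q x"
  shows "(click Q x, Q) \<in> (clickS V E V)\<^sup>*"
proof -
  define Q1 where "Q1 = click Q x"
  have Q1A: "Q1 \<in> Acyc E" unfolding Q1_def by (rule click_Acyc[OF assms(1,2,4)])
  have cl: "\<forall>a b. (a, b) \<in> Q1 \<longrightarrow> b \<in> V - {x} \<longrightarrow> a \<in> V - {x}"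
  proof (intro allI impI)
    fix a b assume ab: "(a, b) \<in> Q1" "b \<in> V - {x}"
    have "a \<in> V" using arc_V[OF assms(1) Q1A ab(1)] by blast
    moreover have "a \<noteq> x"
    proof
      assume "a = x"
      then have "(b, x) \<in> Q" using ab unfolding Q1_def click_def by auto
      then show False using assms(4) unfolding is_source_def by blast
    qed
    ultimately show "a \<in> V - {x}" by blast
  qed
  have "(Q1, flip Q1 (V - {x})) \<in> (clickS V E V)\<^sup>*"
    by (rule flip_lemma[OF assms(1)]) (use sg_finite[OF assms(1)] Q1A cl in auto)
  moreover have "flip Q1 (V - {x}) = click Q1 x"
  proof (rule set_eqI, clarify)
    fix a b
    show "(a, b) \<in> flip Q1 (V - {x}) \<longleftrightarrow> (a, b) \<in> click Q1 x"
      using arc_V[OF assms(1) Q1A, of a b] arc_V[OF assms(1) Q1A, of b a] assms(3)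
      unfolding flip_def click_def by (cases "a = x"; cases "b = x") auto
  qed
  ultimately show ?thesis unfolding Q1_def click_click by simp
qed


lemma rtrancl_sym_aux:
  assumes "\<forall>a b. (a, b) \<in> R \<longrightarrow> (b, a) \<in> R\<^sup>*" "(x, y) \<in> R\<^sup>*"
  shows "(y, x) \<in> R\<^sup>*"
  using assms(2)
proof (induction rule: rtrancl_induct)
  case base
  then show ?case by simp
next
  case (step y z)
  then have "(z, y) \<in> R\<^sup>*" using assms(1) by blast
  then show ?case using step.IH by (rule rtrancl_trans)
qed

lemma kappa_equiv:
  assumes "simple_graph V E"
  shows "equiv (Acyc E) (kappa_rel V E)"
proof (rule equivI)
  show "kappa_rel V E \<subseteq> Acyc E \<times> Acyc E" unfolding kappa_rel_def by blast
  show "refl_on (Acyc E) (kappa_rel V E)" unfolding kappa_rel_def refl_on_def by blast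
  have st: "\<forall>a b. (a, b) \<in> click_rel V E \<longrightarrow> (b, a) \<in> (click_rel V E)\<^sup>*"
  proof (intro allI impI)
    fix a b assume "(a, b) \<in> click_rel V E"
    then obtain x where "a \<in> Acyc E" "x \<in> V" "is_source a x" "b = click a x"
      unfolding click_rel_def by blast
    then have "(click a x, a) \<in> (clickS V E V)\<^sup>*"
      using click_back[OF assms, of a x] by blast
    then show "(b, a) \<in> (click_rel V E)\<^sup>*"
      using \<open>b = click a x\<close> unfolding click_rel_S by simp
  qed
  show "sym (kappa_rel V E)" unfolding sym_def
  proof (intro allI impI)
    fix a b assume "(a, b) \<in> kappa_rel V E"
    then have "(a, b) \<in> (click_rel V E)\<^sup>*" "a \<in> Acyc E" "b \<in> Acyc E"
      unfolding kappa_rel_def by auto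
    then show "(b, a) \<in> kappa_rel V E"
      using rtrancl_sym_aux[OF st, of a b] unfolding kappa_rel_def by auto
  qed
  show "trans (kappa_rel V E)" unfolding trans_def
  proof (intro allI impI)
    fix a b d assume "(a, b) \<in> kappa_rel V E" "(b, d) \<in> kappa_rel V E"
    then have "(a, b) \<in> (click_rel V E)\<^sup>*" "(b, d) \<in> (click_rel V E)\<^sup>*" "a \<in> Acyc E" "d \<in> Acyc E"
      unfolding kappa_rel_def by auto
    then show "(a, d) \<in> kappa_rel V E"
      unfolding kappa_rel_def by auto
  qed
qed

definition cnt_ok :: "('a \<times> 'a) set \<Rightarrow> ('a \<times> 'a) set \<Rightarrow> ('a \<Rightarrow> nat) \<Rightarrow> bool" where
  "cnt_ok Q P c \<longleftrightarrow> (\<forall>a b. (a, b) \<in> Q \<longrightarrow> (c a = c b \<and> (a, b) \<in> P) \<or> (c a = Suc (c b) \<and> (b, a) \<in> P))"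

lemma cnt_step:
  assumes "cnt_ok Q P c" "P \<in> Acyc E" "is_source P x"
  shows "cnt_ok Q (click P x) (c(x := Suc (c x)))"
  unfolding cnt_ok_def
proof (intro allI impI)
  fix a b assume ab: "(a, b) \<in> Q"
  have acP: "acyclic P" using AcycD[OF assms(2)] by (rule conjunct2)
  have irr: "\<And>y. (y, y) \<notin> P" by (rule acyc_irrefl[OF acP])
  have src: "\<And>y. (y, x) \<notin> P" using assms(3) unfolding is_source_def by blast
  from assms(1) ab have "(c a = c b \<and> (a, b) \<in> P) \<or> (c a = Suc (c b) \<and> (b, a) \<in> P)"
    unfolding cnt_ok_def by blast
  then show "((c(x := Suc (c x))) a = (c(x := Suc (c x))) b \<and> (a, b) \<in> click P x) \<or>
        ((c(x := Suc (c x))) a = Suc ((c(x := Suc (c x))) b) \<and> (b, a) \<in> click P x)"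
  proof
    assume h: "c a = c b \<and> (a, b) \<in> P"
    then have ne: "a \<noteq> b" using irr by blast
    show ?thesis
    proof (cases "x = a")
      case True
      have "(b, a) \<in> click P x" unfolding click_def using h True by blast
      then show ?thesis using h True ne by simp
    next
      case False
      then have "x \<noteq> b" using h src by blast
      have "(a, b) \<in> click P x" unfolding click_def using h False \<open>x \<noteq> b\<close> by blast
      then show ?thesis using h False \<open>x \<noteq> b\<close> by simp
    qed
  next
    assume h: "c a = Suc (c b) \<and> (b, a) \<in> P"
    then have ne: "a \<noteq> b" using irr by blast
    show ?thesis
    proof (cases "x = b")
      case True
      have "(a, b) \<in> click P x" unfolding click_def using h True by blast
      then show ?thesis using h True ne by simp
    next
      case False
      then have "x \<noteq> a" using h src by blast
      have "(b, a) \<in> click P x" unfolding click_def using h False \<open>x \<noteq> a\<close> by blast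
      then show ?thesis using h False \<open>x \<noteq> a\<close> by simp
    qed
  qed
qed

lemma cnt_path:
  assumes "(Q, P) \<in> (clickS V E S)\<^sup>*"
  shows "\<exists>c. (\<forall>x. x \<notin> S \<longrightarrow> c x = 0) \<and> cnt_ok Q P c"
  using assms
proof (induction rule: rtrancl_induct)
  case base
  have "cnt_ok Q Q (\<lambda>_. 0)" unfolding cnt_ok_def by simp
  then show ?case by (intro exI[of _ "\<lambda>_. 0"]) simp
next
  case (step y z)
  obtain c where c: "\<forall>x. x \<notin> S \<longrightarrow> c x = 0" "cnt_ok Q y c" using step.IH by blast
  from step(2) obtain x where x: "y \<in> Acyc E" "x \<in> S" "is_source y x" "z = click y x"
    unfolding clickS_def by blast
  have "cnt_ok Q z (c(x := Suc (c x)))" using cnt_step[OF c(2) x(1) x(3)] x(4) by simp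
  moreover have "\<forall>u. u \<notin> S \<longrightarrow> (c(x := Suc (c x))) u = 0" using c(1) x(2) by auto
  ultimately show ?case by blast
qed

definition usrc :: "'a set \<Rightarrow> ('a \<times> 'a) set \<Rightarrow> 'a \<Rightarrow> bool" where
  "usrc V P r \<longleftrightarrow> r \<in> V \<and> is_source P r \<and> (\<forall>x\<in>V. is_source P x \<longrightarrow> x = r)"

lemma usrc_unique:
  assumes sg: "simple_graph V E" and A1: "P1 \<in> Acyc E" and A2: "P2 \<in> Acyc E"
    and cn: "cnt_ok P1 P2 c" and u1: "usrc V P1 r" and u2: "usrc V P2 r"
  shows "P1 = P2"
proof -
  have fin: "finite V" using sg_finite[OF sg] .
  have rV: "r \<in> V" using u1 unfolding usrc_def by blast
  have o1: "is_orientation E P1" and ac1: "acyclic P1" using AcycD[OF A1] by blast+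
  have o2: "is_orientation E P2" and ac2: "acyclic P2" using AcycD[OF A2] by blast+
  define M where "M = Max (c ` V)"
  define X where "X = {x \<in> V. c x = M}"
  have le: "\<And>x. x \<in> V \<Longrightarrow> c x \<le> M" unfolding M_def using fin by simp
  have "M \<in> c ` V" unfolding M_def using fin rV by (intro Max_in) auto
  then obtain x0 where "x0 \<in> V" "c x0 = M" by blast
  then have Xne: "X \<noteq> {}" unfolding X_def by blast
  have cn': "\<And>a b. (a, b) \<in> P1 \<Longrightarrow> (c a = c b \<and> (a, b) \<in> P2) \<or> (c a = Suc (c b) \<and> (b, a) \<in> P2)"
    using cn unfolding cnt_ok_def by blast
  have cross: "(x, y) \<in> P1 \<and> (y, x) \<in> P2"
    if xy: "x \<in> X" "y \<in> V" "y \<notin> X" "{x, y} \<in> E" for x y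
  proof -
    have cx: "c x = M" "x \<in> V" using xy unfolding X_def by auto
    have cy: "c y \<noteq> M" using xy unfolding X_def by auto
    have "(y, x) \<notin> P1"
    proof
      assume "(y, x) \<in> P1"
      then have "c y = c x \<or> c y = Suc (c x)" using cn' by blast
      then show False using cx cy le[OF xy(2)] by auto
    qed
    then have "(x, y) \<in> P1" using ori_iff[OF o1 xy(4)] by blast
    then have "(c x = c y \<and> (x, y) \<in> P2) \<or> (c x = Suc (c y) \<and> (y, x) \<in> P2)" using cn' by blast
    then show ?thesis using cx cy \<open>(x, y) \<in> P1\<close> by auto
  qed
  have XV: "X = V"
  proof (rule ccontr)
    assume "X \<noteq> V"
    then have nX: "V - X \<noteq> {}" unfolding X_def by auto
    have finX: "finite X" unfolding X_def using fin by simp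
    obtain m where m: "m \<in> X" "\<forall>y\<in>X. (y, m) \<notin> P1" using min_elem[OF finX ac1 Xne] by blast
    have "is_source P1 m" unfolding is_source_def
    proof (intro allI notI)
      fix z assume zm: "(z, m) \<in> P1"
      have zV: "z \<in> V" using arc_V[OF sg A1 zm] by blast
      show False
      proof (cases "z \<in> X")
        case True
        then show False using m zm by blast
      next
        case False
        have "{m, z} \<in> E" using ori_arc[OF o1 zm] by (simp add: insert_commute)
        then have "(m, z) \<in> P1" using cross[OF m(1) zV False] by blast
        moreover have "{m, z} \<in> E" using ori_arc[OF o1 zm] by (simp add: insert_commute)
        ultimately show False using zm ori_iff[OF o1] by blast
      qed
    qed
    then have "m = r" using u1 m(1) unfolding usrc_def X_def by blast
    then have rX: "r \<in> X" using m(1) by simp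
    have finVX: "finite (V - X)" using fin by simp
    obtain m' where m': "m' \<in> V - X" "\<forall>y\<in>V - X. (y, m') \<notin> P2" using min_elem[OF finVX ac2 nX] by blast
    have "is_source P2 m'" unfolding is_source_def
    proof (intro allI notI)
      fix z assume zm: "(z, m') \<in> P2"
      have zV: "z \<in> V" using arc_V[OF sg A2 zm] by blast
      show False
      proof (cases "z \<in> X")
        case False
        then show False using m' zm zV by blast
      next
        case True
        have e: "{z, m'} \<in> E" using ori_arc[OF o2 zm] .
        have "(m', z) \<in> P2" using cross[OF True _ _ e] m'(1) by blast
        then show False using zm ori_iff[OF o2 e] by blast
      qed
    qed
    then have "m' = r" using u2 m'(1) unfolding usrc_def by blast
    then show False using rX m'(1) by blast
  qed
  have sub: "P1 \<subseteq> P2"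
  proof
    fix p assume p: "p \<in> P1"
    obtain a b where ab: "p = (a, b)" by force
    have "a \<in> V" "b \<in> V" using arc_V[OF sg A1] p ab by blast+
    then have "a \<in> X" "b \<in> X" using XV by auto
    then have "c a = c b" unfolding X_def by simp
    then show "p \<in> P2" using cn' p ab by force
  qed
  show ?thesis
  proof
    show "P1 \<subseteq> P2" by (rule sub)
    show "P2 \<subseteq> P1"
    proof
      fix p assume p: "p \<in> P2"
      obtain a b where ab: "p = (a, b)" by force
      have e: "{a, b} \<in> E" using ori_arc[OF o2] p ab by blast
      show "p \<in> P1"
      proof (rule ccontr)
        assume "p \<notin> P1"
        then have "(b, a) \<in> P1" using ori_iff[OF o1 e] ab by blast
        then have "(b, a) \<in> P2" using sub by blast
        then show False using ori_iff[OF o2 e] p ab by blast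
      qed
    qed
  qed
qed


lemma bound_cnt:
  assumes o: "is_orientation E Q" and cn: "cnt_ok Q P c" and cr: "c r = 0"
  shows "(r, x) \<in> adj E ^^ k \<Longrightarrow> c x \<le> k"
proof (induction k arbitrary: x)
  case 0
  then have "x = r" by simp
  then show ?case using cr by simp
next
  case (Suc k)
  then obtain y where y: "(r, y) \<in> adj E ^^ k" "(y, x) \<in> adj E" by auto
  have e: "{y, x} \<in> E" using y(2) unfolding adj_def by simp
  have cy: "c y \<le> k" using Suc.IH[OF y(1)] .
  have "(y, x) \<in> Q \<or> (x, y) \<in> Q" using ori_iff[OF o e] by blast
  then have "c x \<le> Suc (c y)"
  proof
    assume "(y, x) \<in> Q"
    then have "c y = c x \<or> c y = Suc (c x)" using cn unfolding cnt_ok_def by blast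
    then show ?thesis by auto
  next
    assume "(x, y) \<in> Q"
    then have "c x = c y \<or> c x = Suc (c y)" using cn unfolding cnt_ok_def by blast
    then show ?thesis by auto
  qed
  then show ?case using cy by simp
qed

lemma exists_usrc:
  assumes sg: "simple_graph V E" and cg: "connected_graph V E" and rV: "r \<in> V" and QA: "Q \<in> Acyc E"
  shows "\<exists>P. (Q, P) \<in> (clickS V E (V - {r}))\<^sup>* \<and> usrc V P r"
proof -
  define d where "d x = (SOME k. (r, x) \<in> adj E ^^ k)" for x
  have dk: "(r, x) \<in> adj E ^^ d x" if "x \<in> V" for x
  proof -
    have "(r, x) \<in> (adj E)\<^sup>*" using cg rV that unfolding connected_graph_def by blast
    then obtain k where "(r, x) \<in> adj E ^^ k" using rtrancl_power by blast
    then show ?thesis unfolding d_def by (rule someI)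
  qed
  have oQ: "is_orientation E Q" using AcycD[OF QA] by blast
  have fin: "finite V" using sg_finite[OF sg] .
  have main: "\<forall>P c. (\<Sum>x\<in>V. d x - c x) = n \<longrightarrow> (Q, P) \<in> (clickS V E (V - {r}))\<^sup>* \<longrightarrow> cnt_ok Q P c
     \<longrightarrow> c r = 0 \<longrightarrow> (\<exists>P'. (Q, P') \<in> (clickS V E (V - {r}))\<^sup>* \<and> usrc V P' r)" for n
  proof (induction n rule: less_induct)
    case (less n)
    show ?case
    proof (intro allI impI)
      fix P c
      assume h: "(\<Sum>x\<in>V. d x - c x) = n" "(Q, P) \<in> (clickS V E (V - {r}))\<^sup>*" "cnt_ok Q P c" "c r = 0"
      have PA: "P \<in> Acyc E" using clickS_rtrancl_Acyc[OF sg h(2) QA] .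
      show "\<exists>P'. (Q, P') \<in> (clickS V E (V - {r}))\<^sup>* \<and> usrc V P' r"
      proof (cases "\<exists>x\<in>V. x \<noteq> r \<and> is_source P x")
        case True
        then obtain x where x: "x \<in> V" "x \<noteq> r" "is_source P x" by blast
        define c' where "c' = c(x := Suc (c x))"
        have st: "(P, click P x) \<in> clickS V E (V - {r})" unfolding clickS_def using PA x by blast
        have p': "(Q, click P x) \<in> (clickS V E (V - {r}))\<^sup>*" using h(2) st by (rule rtrancl_into_rtrancl)
        have cn': "cnt_ok Q (click P x) c'" unfolding c'_def by (rule cnt_step[OF h(3) PA x(3)])
        have c'r: "c' r = 0" using h(4) x(2) unfolding c'_def by simp
        have "c' x \<le> d x" using bound_cnt[OF oQ cn' c'r dk[OF x(1)]] .
        then have cx: "c x < d x" unfolding c'_def by simp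
        have s1: "(\<Sum>y\<in>V. d y - c' y) = (d x - c' x) + (\<Sum>y\<in>V - {x}. d y - c' y)"
          using sum.remove[OF fin x(1)] by blast
        have s2: "(\<Sum>y\<in>V. d y - c y) = (d x - c x) + (\<Sum>y\<in>V - {x}. d y - c y)"
          using sum.remove[OF fin x(1)] by blast
        have s3: "(\<Sum>y\<in>V - {x}. d y - c' y) = (\<Sum>y\<in>V - {x}. d y - c y)"
          unfolding c'_def by (rule sum.cong) auto
        have "d x - c' x < d x - c x" using cx unfolding c'_def by simp
        then have lt: "(\<Sum>y\<in>V. d y - c' y) < n" using s1 s2 s3 h(1) by linarith
        have IH: "\<forall>P c. (\<Sum>x\<in>V. d x - c x) = (\<Sum>y\<in>V. d y - c' y) \<longrightarrow> (Q, P) \<in> (clickS V E (V - {r}))\<^sup>*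
          \<longrightarrow> cnt_ok Q P c \<longrightarrow> c r = 0 \<longrightarrow> (\<exists>P'. (Q, P') \<in> (clickS V E (V - {r}))\<^sup>* \<and> usrc V P' r)"
          by (rule less.IH[OF lt])
        show ?thesis using IH[rule_format, OF refl p' cn' c'r] .
      next
        case False
        have acP: "acyclic P" using AcycD[OF PA] by (rule conjunct2)
        have "V \<noteq> {}" using rV by blast
        then obtain s where s: "s \<in> V" "\<forall>y\<in>V. (y, s) \<notin> P" using min_elem[OF fin acP] by blast
        have "is_source P s" unfolding is_source_def
        proof (intro allI notI)
          fix y assume "(y, s) \<in> P"
          moreover then have "y \<in> V" using arc_V[OF sg PA] by blast
          ultimately show False using s(2) by blast
        qed
        then have "s = r" using False s(1) by blast
        then have "usrc V P r" unfolding usrc_def using rV False \<open>is_source P s\<close> by blast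
        then show ?thesis using h(2) by blast
      qed
    qed
  qed
  have c0: "cnt_ok Q Q (\<lambda>_. 0)" by (simp add: cnt_ok_def)
  have z0: "(\<lambda>_. 0::nat) r = 0" by simp
  show ?thesis using main[rule_format, OF refl rtrancl_refl c0 z0] .
qed

lemma linext:
  assumes "finite S" "acyclic R"
  shows "\<exists>xs. distinct xs \<and> set xs = S \<and> (\<forall>i j. i < j \<longrightarrow> j < length xs \<longrightarrow> (xs ! j, xs ! i) \<notin> R)"
  using assms(1)
proof (induction "card S" arbitrary: S)
  case 0
  then have "S = {}" by simp
  then show ?case by (intro exI[of _ "[]"]) simp
next
  case (Suc n)
  then have "S \<noteq> {}" by auto
  then obtain m where m: "m \<in> S" "\<forall>y\<in>S. (y, m) \<notin> R" using min_elem[OF Suc.prems assms(2)] by blast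
  have "n = card (S - {m})" using Suc.hyps(2) Suc.prems m(1) by simp
  then obtain xs where xs: "distinct xs" "set xs = S - {m}"
      "\<forall>i j. i < j \<longrightarrow> j < length xs \<longrightarrow> (xs ! j, xs ! i) \<notin> R"
    using Suc.hyps(1)[of "S - {m}"] Suc.prems by blast
  have "distinct (m # xs) \<and> set (m # xs) = S \<and>
     (\<forall>i j. i < j \<longrightarrow> j < length (m # xs) \<longrightarrow> ((m # xs) ! j, (m # xs) ! i) \<notin> R)"
  proof (intro conjI allI impI)
    show "distinct (m # xs)" using xs by simp
    show "set (m # xs) = S" using xs m by auto
    fix i j assume ij: "i < j" "j < length (m # xs)"
    then obtain j' where j': "j = Suc j'" "j' < length xs" by (cases j) auto
    show "((m # xs) ! j, (m # xs) ! i) \<notin> R"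
    proof (cases i)
      case 0
      have "xs ! j' \<in> S" using xs(2) j'(2) nth_mem by fastforce
      then show ?thesis using 0 j' m(2) by simp
    next
      case (Suc i')
      then have "i' < j'" using ij j' by simp
      then show ?thesis using xs(3) j' Suc by simp
    qed
  qed
  then show ?case by blast
qed


lemma path_kappa:
  assumes sg: "simple_graph V E" and p: "(P, Q) \<in> (clickS V E S)\<^sup>*" and PA: "P \<in> Acyc E"
    and SV: "S \<subseteq> V"
  shows "(P, Q) \<in> kappa_rel V E"
proof -
  have QA: "Q \<in> Acyc E" using clickS_rtrancl_Acyc[OF sg p PA] .
  have "(clickS V E S)\<^sup>* \<subseteq> (click_rel V E)\<^sup>*"
    unfolding click_rel_S by (rule rtrancl_mono[OF clickS_mono[OF SV]])
  then have "(P, Q) \<in> (click_rel V E)\<^sup>*" using p by blast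
  then show ?thesis unfolding kappa_rel_def using PA QA by blast
qed

lemma uniq_kappa:
  assumes sg: "simple_graph V E" and k: "(P1, P2) \<in> kappa_rel V E"
    and u1: "usrc V P1 r" and u2: "usrc V P2 r"
  shows "P1 = P2"
proof -
  have "(P1, P2) \<in> (clickS V E V)\<^sup>*" "P1 \<in> Acyc E" "P2 \<in> Acyc E"
    using k unfolding kappa_rel_def click_rel_S by auto
  moreover obtain c where "cnt_ok P1 P2 c" using cnt_path[OF \<open>(P1, P2) \<in> (clickS V E V)\<^sup>*\<close>] by blast
  ultimately show ?thesis using usrc_unique[OF sg _ _ _ u1 u2] by blast
qed

lemma exist_kappa:
  assumes sg: "simple_graph V E" and cg: "connected_graph V E" and rV: "r \<in> V" and QA: "Q \<in> Acyc E"
  shows "\<exists>P. P \<in> Acyc E \<and> (Q, P) \<in> kappa_rel V E \<and> usrc V P r"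
proof -
  obtain P where P: "(Q, P) \<in> (clickS V E (V - {r}))\<^sup>*" "usrc V P r"
    using exists_usrc[OF sg cg rV QA] by blast
  have "(Q, P) \<in> kappa_rel V E" by (rule path_kappa[OF sg P(1) QA]) blast
  moreover have "P \<in> Acyc E" using clickS_rtrancl_Acyc[OF sg P(1) QA] .
  ultimately show ?thesis using P(2) by blast
qed

lemma sg_sub: "simple_graph V E \<Longrightarrow> E' \<subseteq> E \<Longrightarrow> simple_graph V E'"
  unfolding simple_graph_def by blast

lemma acyc_rank:
  assumes "\<forall>a b. (a, b) \<in> R \<longrightarrow> f a < (f b :: nat)"
  shows "acyclic R"
proof -
  have *: "f a < f b" if "(a, b) \<in> R\<^sup>+" for a b
    using that
  proof (induction rule: trancl_induct)
    case (base y)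
    then show ?case using assms by blast
  next
    case (step y z)
    then show ?case using assms by (meson order.strict_trans)
  qed
  show ?thesis unfolding acyclic_def using * by blast
qed

lemma perm_orient_mem:
  assumes "distinct \<pi>"
  shows "(a, b) \<in> perm_orient E \<pi> \<longleftrightarrow> {a, b} \<in> E \<and>
     (\<exists>i j. i < j \<and> j < length \<pi> \<and> \<pi> ! i = a \<and> \<pi> ! j = b)"
  unfolding perm_orient_def by simp

lemma nth_uniq:
  assumes "distinct \<pi>" "i < length \<pi>" "j < length \<pi>" "\<pi> ! i = \<pi> ! j"
  shows "i = j"
  using assms nth_eq_iff_index_eq by blast

lemma perm_Acyc:
  assumes sg: "simple_graph V E" and d: "distinct \<pi>" and s: "set \<pi> = V"
  shows "perm_orient E \<pi> \<in> Acyc E"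
proof (rule AcycI)
  show "is_orientation E (perm_orient E \<pi>)" unfolding is_orientation_def
  proof (intro conjI allI impI ballI)
    fix p assume "p \<in> perm_orient E \<pi>"
    then show "case p of (a, b) \<Rightarrow> {a, b} \<in> E" unfolding perm_orient_def by auto
  next
    fix a b assume e: "{a, b} \<in> E"
    have ab: "a \<noteq> b" "a \<in> set \<pi>" "b \<in> set \<pi>" using sg_edge[OF sg e] s by auto
    obtain i where i: "i < length \<pi>" "\<pi> ! i = a" using ab(2) by (metis in_set_conv_nth)
    obtain j where j: "j < length \<pi>" "\<pi> ! j = b" using ab(3) by (metis in_set_conv_nth)
    have e2: "{b, a} \<in> E" using e by (simp add: insert_commute)
    have ij: "i \<noteq> j" using i j ab(1) by blast
    have A: "(a, b) \<in> perm_orient E \<pi> \<longleftrightarrow> i < j"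
    proof
      assume "(a, b) \<in> perm_orient E \<pi>"
      then obtain i' j' where "i' < j'" "j' < length \<pi>" "\<pi> ! i' = a" "\<pi> ! j' = b"
        unfolding perm_orient_def by blast
      moreover then have "i' = i" "j' = j" using nth_uniq[OF d] i j by (metis order.strict_trans)+
      ultimately show "i < j" by simp
    next
      assume "i < j" then show "(a, b) \<in> perm_orient E \<pi>" unfolding perm_orient_def using e i j by blast
    qed
    have B: "(b, a) \<in> perm_orient E \<pi> \<longleftrightarrow> j < i"
    proof
      assume "(b, a) \<in> perm_orient E \<pi>"
      then obtain i' j' where "i' < j'" "j' < length \<pi>" "\<pi> ! i' = b" "\<pi> ! j' = a"
        unfolding perm_orient_def by blast
      moreover then have "i' = j" "j' = i" using nth_uniq[OF d] i j by (metis order.strict_trans)+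
      ultimately show "j < i" by simp
    next
      assume "j < i" then show "(b, a) \<in> perm_orient E \<pi>" unfolding perm_orient_def using e2 i j by blast
    qed
    show "(a, b) \<in> perm_orient E \<pi> \<longleftrightarrow> (b, a) \<notin> perm_orient E \<pi>" using A B ij by linarith
  qed
  define f where "f x = (THE i. i < length \<pi> \<and> \<pi> ! i = x)" for x
  have fi: "f (\<pi> ! i) = i" if "i < length \<pi>" for i
    unfolding f_def using that nth_uniq[OF d] by (intro the_equality) auto
  show "acyclic (perm_orient E \<pi>)"
  proof (rule acyc_rank[of _ f], intro allI impI)
    fix a b assume "(a, b) \<in> perm_orient E \<pi>"
    then obtain i j where "i < j" "j < length \<pi>" "\<pi> ! i = a" "\<pi> ! j = b"
      unfolding perm_orient_def by blast
    then show "f a < f b" using fi[of i] fi[of j] by simp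
  qed
qed

lemma perm_eq:
  assumes sg: "simple_graph V E" and d: "distinct \<pi>" and s: "set \<pi> = V" and PA: "P \<in> Acyc E"
    and nb: "\<forall>i j. i < j \<longrightarrow> j < length \<pi> \<longrightarrow> (\<pi> ! j, \<pi> ! i) \<notin> P"
  shows "perm_orient E \<pi> = P"
proof -
  have o: "is_orientation E P" using AcycD[OF PA] by blast
  show ?thesis
  proof (rule set_eqI, clarify)
    fix a b
    show "(a, b) \<in> perm_orient E \<pi> \<longleftrightarrow> (a, b) \<in> P"
    proof
      assume "(a, b) \<in> perm_orient E \<pi>"
      then obtain i j where ij: "i < j" "j < length \<pi>" "\<pi> ! i = a" "\<pi> ! j = b" and e: "{a, b} \<in> E"
        unfolding perm_orient_def by blast
      show "(a, b) \<in> P"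
      proof (rule ccontr)
        assume "(a, b) \<notin> P"
        then have "(b, a) \<in> P" using ori_iff[OF o e] by blast
        then show False using nb ij by blast
      qed
    next
      assume ab: "(a, b) \<in> P"
      have e: "{a, b} \<in> E" using ori_arc[OF o ab] .
      have abV: "a \<in> set \<pi>" "b \<in> set \<pi>" "a \<noteq> b" using arc_V[OF sg PA ab] s by auto
      obtain i where i: "i < length \<pi>" "\<pi> ! i = a" using abV(1) by (metis in_set_conv_nth)
      obtain j where j: "j < length \<pi>" "\<pi> ! j = b" using abV(2) by (metis in_set_conv_nth)
      have "i \<noteq> j" using i j abV(3) by blast
      moreover have "\<not> j < i" using nb i j ab by blast
      ultimately have "i < j" by simp
      then show "(a, b) \<in> perm_orient E \<pi>" unfolding perm_orient_def using e i j by blast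
    qed
  qed
qed

definition caseA :: "'a \<Rightarrow> 'a \<Rightarrow> ('a \<times> 'a) set \<Rightarrow> bool" where
  "caseA v w P \<longleftrightarrow> is_source P v \<and> (\<forall>a. (a, w) \<in> P \<longrightarrow> a = v)"


locale dctx =
  fixes V :: "'a set" and E :: "'a set set" and v w :: 'a
  assumes sg: "simple_graph V E" and cg: "connected_graph V E" and ce: "cycle_edge E {v, w}"
begin

lemma vwE: "{v, w} \<in> E" using ce unfolding cycle_edge_def by blast

lemma vw: "v \<noteq> w" "v \<in> V" "w \<in> V" using sg_edge[OF sg vwE] by auto

lemma V2_eq: "contract_vertices V v w = V - {w}" unfolding contract_vertices_def ..

lemma cm_simp: "cmap v w x = (if x = w then v else x)" unfolding cmap_def ..

lemma sg1: "simple_graph V (E - {{v, w}})" by (rule sg_sub[OF sg]) blast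

lemma cg1: "connected_graph V (E - {{v, w}})"
proof -
  have p1: "(v, w) \<in> (adj (E - {{v, w}}))\<^sup>*" using ce unfolding cycle_edge_def by blast
  have p2: "(w, v) \<in> (adj (E - {{v, w}}))\<^sup>*" using ce unfolding cycle_edge_def by (metis insert_commute)
  have "adj E \<subseteq> (adj (E - {{v, w}}))\<^sup>*"
  proof (clarify)
    fix a b assume "(a, b) \<in> adj E"
    then have e: "{a, b} \<in> E" unfolding adj_def by simp
    show "(a, b) \<in> (adj (E - {{v, w}}))\<^sup>*"
    proof (cases "{a, b} = {v, w}")
      case True
      then have "(a = v \<and> b = w) \<or> (a = w \<and> b = v)" by (simp add: doubleton_eq_iff)
      then show ?thesis using p1 p2 by blast
    next
      case False
      then have "(a, b) \<in> adj (E - {{v, w}})" using e unfolding adj_def by simp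
      then show ?thesis by blast
    qed
  qed
  then have "(adj E)\<^sup>* \<subseteq> (adj (E - {{v, w}}))\<^sup>*" by (rule rtrancl_subset_rtrancl)
  then show ?thesis using cg unfolding connected_graph_def by blast
qed

lemma E2_mem: "{a, b} \<in> E \<Longrightarrow> {a, b} \<noteq> {v, w} \<Longrightarrow> {cmap v w a, cmap v w b} \<in> contract_edges E v w"
proof -
  assume "{a, b} \<in> E" "{a, b} \<noteq> {v, w}"
  moreover have "{cmap v w a, cmap v w b} = cmap v w ` {a, b}" by simp
  ultimately show ?thesis unfolding contract_edges_def by blast
qed

lemma E2_D:
  assumes "g \<in> contract_edges E v w"
  obtains a b where "{a, b} \<in> E" "{a, b} \<noteq> {v, w}" "g = {cmap v w a, cmap v w b}"
proof -
  from assms obtain f where f: "f \<in> E" "f \<noteq> {v, w}" "g = cmap v w ` f"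
    unfolding contract_edges_def by blast
  then obtain a b where "f = {a, b}" using sg unfolding simple_graph_def by blast
  then show ?thesis using that f by simp
qed

lemma cm_ne: "{a, b} \<in> E \<Longrightarrow> {a, b} \<noteq> {v, w} \<Longrightarrow> cmap v w a \<noteq> cmap v w b"
proof -
  assume e: "{a, b} \<in> E" "{a, b} \<noteq> {v, w}"
  have "a \<noteq> b" using sg_edge[OF sg e(1)] by blast
  then show ?thesis using e(2) vw(1) unfolding cmap_def by (auto simp: insert_commute)
qed

lemma cm_V: "x \<in> V \<Longrightarrow> cmap v w x \<in> V - {w}"
  using vw unfolding cmap_def by auto

lemma sg2: "simple_graph (contract_vertices V v w) (contract_edges E v w)"
  unfolding simple_graph_def V2_eq
proof (intro conjI ballI)
  show "finite (V - {w})" using sg_finite[OF sg] by simp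
  fix g assume "g \<in> contract_edges E v w"
  then obtain a b where ab: "{a, b} \<in> E" "{a, b} \<noteq> {v, w}" "g = {cmap v w a, cmap v w b}"
    by (rule E2_D)
  have "a \<in> V" "b \<in> V" using sg_edge[OF sg ab(1)] by auto
  then show "\<exists>a b. g = {a, b} \<and> a \<noteq> b \<and> a \<in> V - {w} \<and> b \<in> V - {w}"
    using ab cm_ne[OF ab(1,2)] cm_V by blast
qed

lemma cg2: "connected_graph (contract_vertices V v w) (contract_edges E v w)"
  unfolding connected_graph_def V2_eq
proof (intro conjI ballI)
  show "V - {w} \<noteq> {}" using vw by blast
  have *: "(cmap v w a, cmap v w b) \<in> (adj (contract_edges E v w))\<^sup>*" if "(a, b) \<in> (adj E)\<^sup>*" for a b
    using that
  proof (induction rule: rtrancl_induct)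
    case base
    then show ?case by simp
  next
    case (step y z)
    have e: "{y, z} \<in> E" using step(2) unfolding adj_def by simp
    show ?case
    proof (cases "{y, z} = {v, w}")
      case True
      then have "cmap v w y = cmap v w z" unfolding cmap_def by (auto simp: doubleton_eq_iff)
      then show ?thesis using step.IH by simp
    next
      case False
      then have "(cmap v w y, cmap v w z) \<in> adj (contract_edges E v w)"
        using E2_mem[OF e False] unfolding adj_def by simp
      with step.IH show ?thesis by (rule rtrancl_into_rtrancl)
    qed
  qed
  fix a b assume ab: "a \<in> V - {w}" "b \<in> V - {w}"
  then have "(a, b) \<in> (adj E)\<^sup>*" using cg unfolding connected_graph_def by blast
  then have "(cmap v w a, cmap v w b) \<in> (adj (contract_edges E v w))\<^sup>*" by (rule *)
  then show "(a, b) \<in> (adj (contract_edges E v w))\<^sup>*" using ab unfolding cmap_def by simp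
qed

lemma v_out: "P \<in> Acyc E \<Longrightarrow> is_source P v \<Longrightarrow> (v, w) \<in> P \<and> (w, v) \<notin> P"
proof -
  assume A: "P \<in> Acyc E" "is_source P v"
  have o: "is_orientation E P" using AcycD[OF A(1)] by blast
  have "(w, v) \<notin> P" using A(2) unfolding is_source_def by blast
  then show ?thesis using ori_iff[OF o vwE] by blast
qed

end


context dctx
begin

lemma del_Acyc:
  assumes PA: "P \<in> Acyc E"
  shows "delete_orient v w P \<in> Acyc (E - {{v, w}})"
proof (rule AcycI)
  have o: "is_orientation E P" using AcycD[OF PA] by blast
  have ac: "acyclic P" using AcycD[OF PA] by blast
  show "acyclic (delete_orient v w P)" unfolding delete_orient_def
    by (rule acyclic_subset[OF ac]) blast
  show "is_orientation (E - {{v, w}}) (delete_orient v w P)" unfolding is_orientation_def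
  proof (intro conjI allI impI ballI)
    fix p assume p: "p \<in> delete_orient v w P"
    obtain a b where ab: "p = (a, b)" by force
    have "(a, b) \<in> P" "(a, b) \<noteq> (v, w)" "(a, b) \<noteq> (w, v)" using p ab unfolding delete_orient_def by auto
    moreover have "{a, b} \<in> E" using ori_arc[OF o] \<open>(a, b) \<in> P\<close> by blast
    ultimately have "{a, b} \<in> E - {{v, w}}" by (auto simp: doubleton_eq_iff)
    then show "case p of (a, b) \<Rightarrow> {a, b} \<in> E - {{v, w}}" using ab by simp
  next
    fix a b assume e: "{a, b} \<in> E - {{v, w}}"
    then have "(a, b) \<noteq> (v, w)" "(a, b) \<noteq> (w, v)" "(b, a) \<noteq> (v, w)" "(b, a) \<noteq> (w, v)"
      by (auto simp: insert_commute)
    moreover have "(a, b) \<in> P \<longleftrightarrow> (b, a) \<notin> P" using ori_iff[OF o] e by blast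
    ultimately show "(a, b) \<in> delete_orient v w P \<longleftrightarrow> (b, a) \<notin> delete_orient v w P"
      unfolding delete_orient_def by blast
  qed
qed

lemma del_click:
  assumes "is_source P x"
  shows "delete_orient v w (click P x) = click (delete_orient v w P) x"
    and "is_source (delete_orient v w P) x"
proof -
  show "is_source (delete_orient v w P) x" using assms unfolding is_source_def delete_orient_def by blast
  show "delete_orient v w (click P x) = click (delete_orient v w P) x"
  proof (rule set_eqI, clarify)
    fix a b
    show "(a, b) \<in> delete_orient v w (click P x) \<longleftrightarrow> (a, b) \<in> click (delete_orient v w P) x"
      unfolding delete_orient_def click_def by auto
  qed
qed

lemma del_kappa:
  assumes k: "(P, Q) \<in> kappa_rel V E"
  shows "(delete_orient v w P, delete_orient v w Q) \<in> kappa_rel V (E - {{v, w}})"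
proof -
  have p: "(P, Q) \<in> (click_rel V E)\<^sup>*" and PA: "P \<in> Acyc E" and QA: "Q \<in> Acyc E"
    using k unfolding kappa_rel_def by auto
  have "(delete_orient v w P, delete_orient v w Q) \<in> (click_rel V (E - {{v, w}}))\<^sup>*"
    using p
  proof (induction rule: rtrancl_induct)
    case base
    then show ?case by simp
  next
    case (step y z)
    from step(2) obtain x where x: "y \<in> Acyc E" "x \<in> V" "is_source y x" "z = click y x"
      unfolding click_rel_def by blast
    have "(delete_orient v w y, delete_orient v w z) \<in> click_rel V (E - {{v, w}})"
      unfolding click_rel_def using del_click[OF x(3)] x del_Acyc[OF x(1)] by auto
    with step.IH show ?case by (rule rtrancl_into_rtrancl)
  qed
  then show ?thesis unfolding kappa_rel_def using del_Acyc[OF PA] del_Acyc[OF QA] by blast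
qed

lemma usrc_del:
  assumes PA: "P \<in> Acyc E" and u: "usrc V P v" and nA: "\<not> caseA v w P"
  shows "usrc V (delete_orient v w P) v"
  unfolding usrc_def
proof (intro conjI ballI impI)
  show "v \<in> V" using vw by blast
  have sv: "is_source P v" using u unfolding usrc_def by blast
  then show "is_source (delete_orient v w P) v" unfolding is_source_def delete_orient_def by blast
  fix x assume xV: "x \<in> V" and sx: "is_source (delete_orient v w P) x"
  show "x = v"
  proof (rule ccontr)
    assume xv: "x \<noteq> v"
    show False
    proof (cases "x = w")
      case True
      from nA sv obtain a where a: "(a, w) \<in> P" "a \<noteq> v" unfolding caseA_def by blast
      then have "(a, w) \<in> delete_orient v w P" unfolding delete_orient_def using vw(1) by auto
      then show False using sx True unfolding is_source_def by blast
    next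
      case False
      have "\<not> is_source P x" using u xV xv unfolding usrc_def by blast
      then obtain a where a: "(a, x) \<in> P" unfolding is_source_def by blast
      then have "(a, x) \<in> delete_orient v w P" unfolding delete_orient_def using False xv by auto
      then show False using sx unfolding is_source_def by blast
    qed
  qed
qed

lemma del_lift:
  assumes QA: "Q \<in> Acyc (E - {{v, w}})" and u: "usrc V Q v"
  shows "insert (v, w) Q \<in> Acyc E" "usrc V (insert (v, w) Q) v" "\<not> caseA v w (insert (v, w) Q)"
    "delete_orient v w (insert (v, w) Q) = Q"
proof -
  have o: "is_orientation (E - {{v, w}}) Q" using AcycD[OF QA] by blast
  have ac: "acyclic Q" using AcycD[OF QA] by blast
  have sv: "is_source Q v" using u unfolding usrc_def by blast
  have nvw: "(v, w) \<notin> Q" "(w, v) \<notin> Q"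
    using ori_arc[OF o, of v w] ori_arc[OF o, of w v] by (auto simp: insert_commute)
  show "delete_orient v w (insert (v, w) Q) = Q" unfolding delete_orient_def using nvw by auto
  show "insert (v, w) Q \<in> Acyc E"
  proof (rule AcycI)
    show "is_orientation E (insert (v, w) Q)" unfolding is_orientation_def
    proof (intro conjI allI impI ballI)
      fix p assume p: "p \<in> insert (v, w) Q"
      obtain a b where ab: "p = (a, b)" by force
      have "{a, b} \<in> E" using p ab vwE ori_arc[OF o, of a b] by auto
      then show "case p of (a, b) \<Rightarrow> {a, b} \<in> E" using ab by simp
    next
      fix a b assume e: "{a, b} \<in> E"
      show "(a, b) \<in> insert (v, w) Q \<longleftrightarrow> (b, a) \<notin> insert (v, w) Q"
      proof (cases "{a, b} = {v, w}")
        case True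
        then have "(a = v \<and> b = w) \<or> (a = w \<and> b = v)" by (simp add: doubleton_eq_iff)
        then show ?thesis using nvw vw(1) by auto
      next
        case False
        then have e': "{a, b} \<in> E - {{v, w}}" using e by blast
        have "(a, b) \<noteq> (v, w)" "(b, a) \<noteq> (v, w)" using False by (auto simp: insert_commute)
        then show ?thesis using ori_iff[OF o e'] by auto
      qed
    qed
    show "acyclic (insert (v, w) Q)"
    proof (rule acyc_root[OF ac, of v])
      show "\<forall>a. (a, v) \<notin> insert (v, w) Q" using sv vw(1) unfolding is_source_def by auto
      show "\<forall>a b. (a, b) \<in> insert (v, w) Q \<longrightarrow> a \<noteq> v \<longrightarrow> (a, b) \<in> Q" by auto
    qed
  qed
  show "usrc V (insert (v, w) Q) v" unfolding usrc_def
  proof (intro conjI ballI impI)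
    show "v \<in> V" using vw by blast
    show "is_source (insert (v, w) Q) v" using sv vw(1) unfolding is_source_def by auto
    fix x assume "x \<in> V" "is_source (insert (v, w) Q) x"
    then have "is_source Q x" unfolding is_source_def by auto
    then show "x = v" using u \<open>x \<in> V\<close> unfolding usrc_def by blast
  qed
  show "\<not> caseA v w (insert (v, w) Q)"
  proof
    assume cA: "caseA v w (insert (v, w) Q)"
    have "\<not> is_source Q w" using u vw unfolding usrc_def by blast
    then obtain a where a: "(a, w) \<in> Q" unfolding is_source_def by blast
    then have "a = v" using cA unfolding caseA_def by blast
    then show False using a nvw by blast
  qed
qed

lemma ins_del: "P \<in> Acyc E \<Longrightarrow> is_source P v \<Longrightarrow> insert (v, w) (delete_orient v w P) = P"
  using v_out unfolding delete_orient_def by blast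

end


context dctx
begin

lemma caseA_facts:
  assumes PA: "P \<in> Acyc E" and cA: "caseA v w P"
  shows "\<And>a. (a, v) \<notin> P" "\<And>a. (a, w) \<in> P \<Longrightarrow> a = v" "(v, w) \<in> P"
proof -
  show "\<And>a. (a, v) \<notin> P" using cA unfolding caseA_def is_source_def by blast
  show "\<And>a. (a, w) \<in> P \<Longrightarrow> a = v" using cA unfolding caseA_def by blast
  show "(v, w) \<in> P" using v_out[OF PA] cA unfolding caseA_def by blast
qed

lemma contract_I: "(a, b) \<in> P \<Longrightarrow> {a, b} \<noteq> {v, w} \<Longrightarrow> (cmap v w a, cmap v w b) \<in> contract_orient v w P"
  unfolding contract_orient_def by blast

lemma contract_D:
  assumes PA: "P \<in> Acyc E" and cA: "caseA v w P" and cd: "(c, d) \<in> contract_orient v w P"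
  shows "d \<noteq> v" "d \<noteq> w" "c \<noteq> w" "c \<noteq> v \<Longrightarrow> (c, d) \<in> P" "c = v \<Longrightarrow> (v, d) \<in> P \<or> (w, d) \<in> P"
proof -
  note f = caseA_facts[OF PA cA]
  obtain a b where ab: "(a, b) \<in> P" "{a, b} \<noteq> {v, w}" "c = cmap v w a" "d = cmap v w b"
    using cd unfolding contract_orient_def by blast
  have bv: "b \<noteq> v" using f(1) ab(1) by blast
  have bw: "b \<noteq> w"
  proof
    assume "b = w"
    then have "a = v" using f(2) ab(1) by blast
    then show False using ab(2) \<open>b = w\<close> by simp
  qed
  have db: "d = b" using ab(4) bw unfolding cmap_def by simp
  show "d \<noteq> v" using db bv by simp
  show "d \<noteq> w" using db bw by simp
  show "c \<noteq> w" using ab(3) vw(1) unfolding cmap_def by auto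
  show "c \<noteq> v \<Longrightarrow> (c, d) \<in> P" using ab db unfolding cmap_def by (auto split: if_splits)
  show "c = v \<Longrightarrow> (v, d) \<in> P \<or> (w, d) \<in> P" using ab db unfolding cmap_def by (auto split: if_splits)
qed

lemma contract_Acyc:
  assumes PA: "P \<in> Acyc E" and cA: "caseA v w P"
  shows "contract_orient v w P \<in> Acyc (contract_edges E v w)"
proof (rule AcycI)
  have o: "is_orientation E P" using AcycD[OF PA] by blast
  have ac: "acyclic P" using AcycD[OF PA] by blast
  note D = contract_D[OF PA cA]
  show "acyclic (contract_orient v w P)"
  proof (rule acyc_root[OF ac, of v])
    show "\<forall>a. (a, v) \<notin> contract_orient v w P" using D(1) by blast
    show "\<forall>a b. (a, b) \<in> contract_orient v w P \<longrightarrow> a \<noteq> v \<longrightarrow> (a, b) \<in> P" using D(4) by blast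
  qed
  show "is_orientation (contract_edges E v w) (contract_orient v w P)" unfolding is_orientation_def
  proof (intro conjI allI impI ballI)
    fix p assume p: "p \<in> contract_orient v w P"
    then obtain a b where ab: "(a, b) \<in> P" "{a, b} \<noteq> {v, w}" "p = (cmap v w a, cmap v w b)"
      unfolding contract_orient_def by blast
    have "{a, b} \<in> E" using ori_arc[OF o ab(1)] .
    then show "case p of (c, d) \<Rightarrow> {c, d} \<in> contract_edges E v w" using E2_mem ab by simp
  next
    fix c d assume e: "{c, d} \<in> contract_edges E v w"
    then obtain a b where ab: "{a, b} \<in> E" "{a, b} \<noteq> {v, w}" "{c, d} = {cmap v w a, cmap v w b}"
      by (rule E2_D)
    have ab2: "{b, a} \<noteq> {v, w}" using ab(2) by (simp add: insert_commute)
    have "(a, b) \<in> P \<or> (b, a) \<in> P" using ori_iff[OF o ab(1)] by blast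
    then have one: "(cmap v w a, cmap v w b) \<in> contract_orient v w P \<or> (cmap v w b, cmap v w a) \<in> contract_orient v w P"
      using contract_I ab(2) ab2 by blast
    have cd: "(c = cmap v w a \<and> d = cmap v w b) \<or> (c = cmap v w b \<and> d = cmap v w a)"
      using ab(3) by (simp add: doubleton_eq_iff)
    have not2: "\<not> ((c, d) \<in> contract_orient v w P \<and> (d, c) \<in> contract_orient v w P)"
    proof
      assume h: "(c, d) \<in> contract_orient v w P \<and> (d, c) \<in> contract_orient v w P"
      have "c \<noteq> v" using D(1) h by blast
      have "d \<noteq> v" using D(1) h by blast
      have p1: "(c, d) \<in> P" using D(4) h \<open>c \<noteq> v\<close> by blast
      have p2: "(d, c) \<in> P" using D(4) h \<open>d \<noteq> v\<close> by blast
      have "{c, d} \<in> E" using ori_arc[OF o p1] .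
      then show False using ori_iff[OF o] p1 p2 by blast
    qed
    show "(c, d) \<in> contract_orient v w P \<longleftrightarrow> (d, c) \<notin> contract_orient v w P"
      using one cd not2 by blast
  qed
qed

lemma usrc_contract:
  assumes PA: "P \<in> Acyc E" and cA: "caseA v w P" and u: "usrc V P v"
  shows "usrc (contract_vertices V v w) (contract_orient v w P) v"
  unfolding usrc_def V2_eq
proof (intro conjI ballI impI)
  note D = contract_D[OF PA cA]
  show "v \<in> V - {w}" using vw by blast
  show "is_source (contract_orient v w P) v" unfolding is_source_def using D(1) by blast
  fix x assume xV: "x \<in> V - {w}" and sx: "is_source (contract_orient v w P) x"
  show "x = v"
  proof (rule ccontr)
    assume xv: "x \<noteq> v"
    have "\<not> is_source P x" using u xV xv unfolding usrc_def by blast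
    then obtain a where a: "(a, x) \<in> P" unfolding is_source_def by blast
    have "{a, x} \<noteq> {v, w}" using xv xV by (auto simp: doubleton_eq_iff)
    then have "(cmap v w a, cmap v w x) \<in> contract_orient v w P" using contract_I a by blast
    moreover have "cmap v w x = x" using xV unfolding cmap_def by simp
    ultimately show False using sx unfolding is_source_def by metis
  qed
qed

lemma contract_sub:
  assumes A1: "P1 \<in> Acyc E" and c1: "caseA v w P1" and A2: "P2 \<in> Acyc E" and c2: "caseA v w P2"
    and eq: "contract_orient v w P1 = contract_orient v w P2"
  shows "P1 \<subseteq> P2"
proof (clarify)
  fix a b assume ab: "(a, b) \<in> P1"
  have o1: "is_orientation E P1" using AcycD[OF A1] by blast
  have o2: "is_orientation E P2" using AcycD[OF A2] by blast
  note f1 = caseA_facts[OF A1 c1] and f2 = caseA_facts[OF A2 c2]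
  have e: "{a, b} \<in> E" using ori_arc[OF o1 ab] .
  have bv: "b \<noteq> v" using f1(1) ab by blast
  show "(a, b) \<in> P2"
  proof (cases "b = w")
    case True
    then have "a = v" using f1(2) ab by blast
    then show ?thesis using True f2(3) by simp
  next
    case bw: False
    show ?thesis
    proof (cases "a = v")
      case True
      have "(b, a) \<notin> P2" using f2(1) True by blast
      then show ?thesis using ori_iff[OF o2 e] by blast
    next
      case av: False
      show ?thesis
      proof (cases "a = w")
        case True
        have "(b, a) \<notin> P2" using f2(2) True bv by blast
        then show ?thesis using ori_iff[OF o2 e] by blast
      next
        case aw: False
        have "{a, b} \<noteq> {v, w}" using av aw by (auto simp: doubleton_eq_iff)
        then have "(cmap v w a, cmap v w b) \<in> contract_orient v w P1" using contract_I ab by blast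
        moreover have "cmap v w a = a" "cmap v w b = b" using aw bw unfolding cmap_def by auto
        ultimately have "(a, b) \<in> contract_orient v w P2" using eq by simp
        then show ?thesis using contract_D(4)[OF A2 c2] av by blast
      qed
    qed
  qed
qed

lemma contract_inj:
  assumes A1: "P1 \<in> Acyc E" and c1: "caseA v w P1" and A2: "P2 \<in> Acyc E" and c2: "caseA v w P2"
    and eq: "contract_orient v w P1 = contract_orient v w P2"
  shows "P1 = P2"
  using contract_sub[OF A1 c1 A2 c2 eq] contract_sub[OF A2 c2 A1 c1 eq[symmetric]] by blast

lemma caseA_click:
  assumes PA: "P \<in> Acyc E" and cA: "caseA v w P" and xV: "x \<in> V" and xv: "x \<noteq> v"
    and sx: "is_source P x"
  shows "x \<noteq> w" "caseA v w (click P x)" "is_source (contract_orient v w P) x"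
    "contract_orient v w (click P x) = click (contract_orient v w P) x"
proof -
  note f = caseA_facts[OF PA cA]
  show xw: "x \<noteq> w" using f(3) sx unfolding is_source_def by blast
  have vx: "(v, x) \<notin> P" "(w, x) \<notin> P" "(x, v) \<notin> P" "(x, w) \<notin> P"
    using sx f(1) f(2)[of x] xv unfolding is_source_def by auto
  show cA': "caseA v w (click P x)" unfolding caseA_def is_source_def
  proof (intro conjI allI impI notI)
    fix y assume "(y, v) \<in> click P x"
    then show False using f(1) vx xv unfolding click_def by auto
  next
    fix a assume "(a, w) \<in> click P x"
    then show "a = v" using f(2) vx xw unfolding click_def by auto
  qed
  have PA': "click P x \<in> Acyc E" using click_Acyc[OF sg PA sx] .
  note D = contract_D[OF PA cA] and D' = contract_D[OF PA' cA']
  show sx2: "is_source (contract_orient v w P) x" unfolding is_source_def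
  proof (intro allI notI)
    fix c assume h: "(c, x) \<in> contract_orient v w P"
    show False
    proof (cases "c = v")
      case True
      then show False using D(5)[OF h] vx by blast
    next
      case False
      then show False using D(4)[OF h] sx unfolding is_source_def by blast
    qed
  qed
  show "contract_orient v w (click P x) = click (contract_orient v w P) x"
  proof (rule set_eqI, clarify)
    fix c d
    show "(c, d) \<in> contract_orient v w (click P x) \<longleftrightarrow> (c, d) \<in> click (contract_orient v w P) x"
    proof
      assume h: "(c, d) \<in> contract_orient v w (click P x)"
      have dv: "d \<noteq> v" "d \<noteq> w" "c \<noteq> w" using D'(1-3)[OF h] by auto
      show "(c, d) \<in> click (contract_orient v w P) x"
      proof (cases "c = v")
        case True
        then have "(v, d) \<in> click P x \<or> (w, d) \<in> click P x" using D'(5)[OF h] by blast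
        then have "((v, d) \<in> P \<or> (w, d) \<in> P) \<and> d \<noteq> x"
          using vx xv xw unfolding click_def by auto
        moreover have "(v, d) \<in> contract_orient v w P" if "(v, d) \<in> P"
          using contract_I[OF that] dv vw(1) unfolding cmap_def by (auto simp: doubleton_eq_iff)
        moreover have "(v, d) \<in> contract_orient v w P" if "(w, d) \<in> P"
          using contract_I[OF that] dv vw(1) unfolding cmap_def by (auto simp: doubleton_eq_iff)
        ultimately show ?thesis using True xv unfolding click_def by auto
      next
        case cv: False
        then have "(c, d) \<in> click P x" using D'(4)[OF h] by blast
        then have "((c, d) \<in> P \<and> c \<noteq> x \<and> d \<noteq> x) \<or> ((d, c) \<in> P \<and> (c = x \<or> d = x))"
          unfolding click_def by blast
        moreover have "(c, d) \<in> contract_orient v w P" if "(c, d) \<in> P"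
          using contract_I[OF that] dv cv unfolding cmap_def by (auto simp: doubleton_eq_iff)
        moreover have "(d, c) \<in> contract_orient v w P" if "(d, c) \<in> P"
          using contract_I[OF that] dv cv unfolding cmap_def by (auto simp: doubleton_eq_iff)
        ultimately show ?thesis unfolding click_def by auto
      qed
    next
      assume h: "(c, d) \<in> click (contract_orient v w P) x"
      then have h2: "((c, d) \<in> contract_orient v w P \<and> c \<noteq> x \<and> d \<noteq> x) \<or>
          ((d, c) \<in> contract_orient v w P \<and> (c = x \<or> d = x))"
        unfolding click_def by blast
      show "(c, d) \<in> contract_orient v w (click P x)"
      proof (cases "(c, d) \<in> contract_orient v w P \<and> c \<noteq> x \<and> d \<noteq> x")
        case True
        then have cd: "(c, d) \<in> contract_orient v w P" "c \<noteq> x" "d \<noteq> x" by auto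
        have dv: "d \<noteq> v" "d \<noteq> w" "c \<noteq> w" using D(1-3)[OF cd(1)] by auto
        show ?thesis
        proof (cases "c = v")
          case True
          then have "(v, d) \<in> P \<or> (w, d) \<in> P" using D(5)[OF cd(1)] by blast
          then have "(v, d) \<in> click P x \<or> (w, d) \<in> click P x" using cd xv xw unfolding click_def by auto
          moreover have "(v, d) \<in> contract_orient v w (click P x)" if "(v, d) \<in> click P x"
            using contract_I[OF that] dv vw(1) unfolding cmap_def by (auto simp: doubleton_eq_iff)
          moreover have "(v, d) \<in> contract_orient v w (click P x)" if "(w, d) \<in> click P x"
            using contract_I[OF that] dv vw(1) unfolding cmap_def by (auto simp: doubleton_eq_iff)
          ultimately show ?thesis using True by blast
        next
          case False
          then have "(c, d) \<in> P" using D(4)[OF cd(1)] by blast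
          then have cl: "(c, d) \<in> click P x" using cd unfolding click_def by blast
          have "{c, d} \<noteq> {v, w}" using dv by (auto simp: doubleton_eq_iff)
          from contract_I[OF cl this] show ?thesis using dv unfolding cmap_def by simp
        qed
      next
        case False
        then have cd: "(d, c) \<in> contract_orient v w P" "c = x \<or> d = x" using h2 by auto
        have dv: "c \<noteq> v" "c \<noteq> w" "d \<noteq> w" using D(1-3)[OF cd(1)] by auto
        have "c \<noteq> x" using cd(1) sx2 unfolding is_source_def by blast
        then have dx: "d = x" using cd(2) by blast
        then have dnv: "d \<noteq> v" using xv by simp
        then have "(d, c) \<in> P" using D(4)[OF cd(1)] by blast
        then have cl: "(c, d) \<in> click P x" using dx unfolding click_def by blast
        have "{c, d} \<noteq> {v, w}" using dv by (auto simp: doubleton_eq_iff)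
        from contract_I[OF cl this] show ?thesis using dv unfolding cmap_def by simp
      qed
    qed
  qed
qed

end


context dctx
begin

lemma nv_path:
  assumes p: "(P, Q) \<in> (clickS V E (V - {v}))\<^sup>*" and PA: "P \<in> Acyc E" and cA: "caseA v w P"
  shows "caseA v w Q \<and> (contract_orient v w P, contract_orient v w Q) \<in> (click_rel (contract_vertices V v w) (contract_edges E v w))\<^sup>*"
  using p
proof (induction rule: rtrancl_induct)
  case base
  then show ?case using cA by simp
next
  case (step y z)
  from step(2) obtain x where x: "y \<in> Acyc E" "x \<in> V - {v}" "is_source y x" "z = click y x"
    unfolding clickS_def by blast
  have cy: "caseA v w y" using step.IH by blast
  note cc = caseA_click[OF x(1) cy _ _ x(3)]
  have xw: "x \<noteq> w" using cc x(2) by blast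
  have "(contract_orient v w y, contract_orient v w z) \<in> click_rel (contract_vertices V v w) (contract_edges E v w)"
    unfolding click_rel_def V2_eq
    using cc x xw contract_Acyc[OF x(1) cy] by auto
  with step.IH have "(contract_orient v w P, contract_orient v w z) \<in> (click_rel (contract_vertices V v w) (contract_edges E v w))\<^sup>*"
    by (meson rtrancl_into_rtrancl)
  moreover have "caseA v w z" using cc x by blast
  ultimately show ?case by blast
qed

lemma perm_caseA:
  assumes st: "starts_vw V v w \<pi>"
  shows "perm_orient E \<pi> \<in> Acyc E" "caseA v w (perm_orient E \<pi>)"
proof -
  have d: "distinct \<pi>" and s: "set \<pi> = V" using st unfolding starts_vw_def is_perm_def by auto
  obtain rest where r: "\<pi> = v # w # rest" using st unfolding starts_vw_def by blast
  show "perm_orient E \<pi> \<in> Acyc E" by (rule perm_Acyc[OF sg d s])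
  have l: "0 < length \<pi>" "1 < length \<pi>" using r by auto
  have p0: "\<pi> ! 0 = v" and p1: "\<pi> ! 1 = w" using r by auto
  show "caseA v w (perm_orient E \<pi>)" unfolding caseA_def is_source_def
  proof (intro conjI allI impI notI)
    fix y assume "(y, v) \<in> perm_orient E \<pi>"
    then obtain i j where ij: "i < j" "j < length \<pi>" "\<pi> ! j = v" unfolding perm_orient_def by blast
    then have "j = 0" using nth_uniq[OF d ij(2) l(1)] p0 by simp
    then show False using ij by simp
  next
    fix a assume "(a, w) \<in> perm_orient E \<pi>"
    then obtain i j where ij: "i < j" "j < length \<pi>" "\<pi> ! i = a" "\<pi> ! j = w" unfolding perm_orient_def by blast
    then have "j = 1" using nth_uniq[OF d ij(2) l(2)] p1 by simp
    then have "i = 0" using ij by simp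
    then show "a = v" using ij p0 by simp
  qed
qed

lemma caseA_perm:
  assumes PA: "P \<in> Acyc E" and cA: "caseA v w P"
  shows "\<exists>\<pi>. starts_vw V v w \<pi> \<and> perm_orient E \<pi> = P"
proof -
  have ac: "acyclic P" using AcycD[OF PA] by blast
  note f = caseA_facts[OF PA cA]
  have fin: "finite (V - {v, w})" using sg_finite[OF sg] by simp
  obtain xs where xs: "distinct xs" "set xs = V - {v, w}"
      "\<forall>i j. i < j \<longrightarrow> j < length xs \<longrightarrow> (xs ! j, xs ! i) \<notin> P"
    using linext[OF fin ac] by blast
  define \<pi> where "\<pi> = v # w # xs"
  have d: "distinct \<pi>" unfolding \<pi>_def using xs vw by auto
  have s: "set \<pi> = V" unfolding \<pi>_def using xs vw by auto
  have nb: "\<forall>i j. i < j \<longrightarrow> j < length \<pi> \<longrightarrow> (\<pi> ! j, \<pi> ! i) \<notin> P"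
  proof (intro allI impI)
    fix i j assume ij: "i < j" "j < length \<pi>"
    show "(\<pi> ! j, \<pi> ! i) \<notin> P"
    proof (cases i)
      case 0
      then show ?thesis unfolding \<pi>_def using f(1) by simp
    next
      case (Suc i')
      then obtain j' where j': "j = Suc (Suc j')" "j' < length xs"
        using ij unfolding \<pi>_def by (cases j; cases "j - 1") auto
      show ?thesis
      proof (cases i')
        case 0
        have "xs ! j' \<in> V - {v, w}" using xs(2) j'(2) nth_mem by blast
        then have "(xs ! j', w) \<notin> P" using f(2) by blast
        then show ?thesis unfolding \<pi>_def using Suc 0 j' by simp
      next
        case (Suc i'')
        then have "i'' < j'" using ij j' \<open>i = Suc i'\<close> by simp
        then show ?thesis unfolding \<pi>_def using xs(3) j' Suc \<open>i = Suc i'\<close> by simp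
      qed
    qed
  qed
  have "perm_orient E \<pi> = P" by (rule perm_eq[OF sg d s PA nb])
  moreover have "starts_vw V v w \<pi>" unfolding starts_vw_def is_perm_def \<pi>_def using d s \<pi>_def by blast
  ultimately show ?thesis by blast
qed

end


context dctx
begin

lemma contract_lift:
  assumes RA: "R \<in> Acyc (contract_edges E v w)" and u: "usrc (contract_vertices V v w) R v"
  shows "\<exists>P. P \<in> Acyc E \<and> caseA v w P \<and> usrc V P v \<and> contract_orient v w P = R"
proof -
  define cm where "cm = cmap v w"
  define P where "P = {(a, b). {a, b} \<in> E \<and> ((a, b) = (v, w) \<or> ({a, b} \<noteq> {v, w} \<and> (cm a, cm b) \<in> R))}"
  have oR: "is_orientation (contract_edges E v w) R" and acR: "acyclic R" using AcycD[OF RA] by blast+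
  have svR: "\<And>a. (a, v) \<notin> R" using u unfolding usrc_def is_source_def by blast
  have cmv: "cm v = v" "cm w = v" unfolding cm_def cmap_def using vw(1) by auto
  have cmx: "\<And>x. x \<noteq> w \<Longrightarrow> cm x = x" unfolding cm_def cmap_def by simp
  have Pmem: "(a, b) \<in> P \<longleftrightarrow> {a, b} \<in> E \<and> ((a, b) = (v, w) \<or> ({a, b} \<noteq> {v, w} \<and> (cm a, cm b) \<in> R))" for a b
    unfolding P_def by simp
  have vwP: "(v, w) \<in> P" using Pmem vwE by blast
  have noinv: "\<And>a. (a, v) \<notin> P"
  proof
    fix a assume "(a, v) \<in> P"
    then have "(a, v) = (v, w) \<or> ({a, v} \<noteq> {v, w} \<and> (cm a, cm v) \<in> R)" using Pmem by blast
    then show False using vw(1) svR cmv by auto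
  qed
  have inw: "\<And>a. (a, w) \<in> P \<Longrightarrow> a = v"
  proof -
    fix a assume "(a, w) \<in> P"
    then have "(a, w) = (v, w) \<or> ({a, w} \<noteq> {v, w} \<and> (cm a, cm w) \<in> R)" using Pmem by blast
    then show "a = v" using svR cmv by auto
  qed
  have oP: "is_orientation E P" unfolding is_orientation_def
  proof (intro conjI allI impI ballI)
    fix p assume "p \<in> P"
    then show "case p of (a, b) \<Rightarrow> {a, b} \<in> E" unfolding P_def by auto
  next
    fix a b assume e: "{a, b} \<in> E"
    show "(a, b) \<in> P \<longleftrightarrow> (b, a) \<notin> P"
    proof (cases "{a, b} = {v, w}")
      case True
      then have "(a = v \<and> b = w) \<or> (a = w \<and> b = v)" by (simp add: doubleton_eq_iff)
      then show ?thesis using vwP noinv by auto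
    next
      case False
      have e2: "{b, a} \<in> E" "{b, a} \<noteq> {v, w}" using e False by (auto simp: insert_commute)
      have ne: "(a, b) \<noteq> (v, w)" "(b, a) \<noteq> (v, w)" using False by (auto simp: insert_commute)
      have A: "(a, b) \<in> P \<longleftrightarrow> (cm a, cm b) \<in> R" using Pmem[of a b] e False ne by blast
      have B: "(b, a) \<in> P \<longleftrightarrow> (cm b, cm a) \<in> R" using Pmem[of b a] e2 ne by blast
      have "{cm a, cm b} \<in> contract_edges E v w" using E2_mem[OF e False] unfolding cm_def .
      then show ?thesis using A B ori_iff[OF oR] by blast
    qed
  qed
  define P1 where "P1 = {(a, b). (a, b) \<in> P \<and> a \<noteq> v}"
  have noinw1: "\<And>a. (a, w) \<notin> P1" using inw unfolding P1_def by blast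
  have acP1: "acyclic P1"
  proof (rule acyc_root[OF acR, of w])
    show "\<forall>a. (a, w) \<notin> P1" using noinw1 by blast
    show "\<forall>a b. (a, b) \<in> P1 \<longrightarrow> a \<noteq> w \<longrightarrow> (a, b) \<in> R"
    proof (intro allI impI)
      fix a b assume ab: "(a, b) \<in> P1" "a \<noteq> w"
      have av: "a \<noteq> v" and abP: "(a, b) \<in> P" using ab unfolding P1_def by auto
      have bw: "b \<noteq> w" using ab(1) noinw1 by blast
      have "(cm a, cm b) \<in> R" using Pmem[of a b] abP av by blast
      then show "(a, b) \<in> R" using cmx ab(2) bw by simp
    qed
  qed
  have acP: "acyclic P"
  proof (rule acyc_root[OF acP1, of v])
    show "\<forall>a. (a, v) \<notin> P" using noinv by blast
    show "\<forall>a b. (a, b) \<in> P \<longrightarrow> a \<noteq> v \<longrightarrow> (a, b) \<in> P1" unfolding P1_def by blast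
  qed
  have PA: "P \<in> Acyc E" using AcycI[OF oP acP] .
  have cA: "caseA v w P" unfolding caseA_def is_source_def using noinv inw by blast
  have uP: "usrc V P v" unfolding usrc_def
  proof (intro conjI ballI impI)
    show "v \<in> V" using vw by blast
    show "is_source P v" unfolding is_source_def using noinv by blast
    fix x assume xV: "x \<in> V" and sx: "is_source P x"
    show "x = v"
    proof (rule ccontr)
      assume xv: "x \<noteq> v"
      have xw: "x \<noteq> w" using sx vwP unfolding is_source_def by blast
      have "\<not> is_source R x" using u xV xv xw unfolding usrc_def V2_eq by blast
      then obtain c where cx: "(c, x) \<in> R" unfolding is_source_def by blast
      have "{c, x} \<in> contract_edges E v w" using ori_arc[OF oR cx] .
      then obtain a b where ab: "{a, b} \<in> E" "{a, b} \<noteq> {v, w}" "{c, x} = {cmap v w a, cmap v w b}"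
        by (rule E2_D)
      have cmeq: "\<And>y. cmap v w y = x \<Longrightarrow> y = x" using xv unfolding cmap_def by (auto split: if_splits)
      have "(c = cm a \<and> x = cm b) \<or> (c = cm b \<and> x = cm a)" using ab(3) unfolding cm_def by (simp add: doubleton_eq_iff)
      then show False
      proof
        assume h: "c = cm a \<and> x = cm b"
        then have "b = x" using cmeq unfolding cm_def by metis
        have "cm x = x" using cmx xw by blast
        then have r1: "(cm a, cm x) \<in> R" using cx h by simp
        have "{a, x} \<in> E" "{a, x} \<noteq> {v, w}" using ab \<open>b = x\<close> by auto
        then have "(a, x) \<in> P" using Pmem[of a x] r1 by blast
        then show False using sx unfolding is_source_def by blast
      next
        assume h: "c = cm b \<and> x = cm a"
        then have "a = x" using cmeq unfolding cm_def by metis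
        have ab2: "{b, a} \<in> E" "{b, a} \<noteq> {v, w}" using ab by (auto simp: insert_commute)
        have "cm x = x" using cmx xw by blast
        then have r1: "(cm b, cm x) \<in> R" using cx h by simp
        have "{b, x} \<in> E" "{b, x} \<noteq> {v, w}" using ab2 \<open>a = x\<close> by auto
        then have "(b, x) \<in> P" using Pmem[of b x] r1 by blast
        then show False using sx unfolding is_source_def by blast
      qed
    qed
  qed
  have "contract_orient v w P = R"
  proof (rule set_eqI, clarify)
    fix c d
    show "(c, d) \<in> contract_orient v w P \<longleftrightarrow> (c, d) \<in> R"
    proof
      assume "(c, d) \<in> contract_orient v w P"
      then obtain a b where ab: "(a, b) \<in> P" "{a, b} \<noteq> {v, w}" "c = cm a" "d = cm b"
        unfolding contract_orient_def cm_def by blast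
      have "(a, b) \<noteq> (v, w)" using ab(2) by auto
      then show "(c, d) \<in> R" using Pmem[of a b] ab by blast
    next
      assume cd: "(c, d) \<in> R"
      have "{c, d} \<in> contract_edges E v w" using ori_arc[OF oR cd] .
      then obtain a b where ab: "{a, b} \<in> E" "{a, b} \<noteq> {v, w}" "{c, d} = {cmap v w a, cmap v w b}"
        by (rule E2_D)
      have "(c = cm a \<and> d = cm b) \<or> (c = cm b \<and> d = cm a)" using ab(3) unfolding cm_def by (simp add: doubleton_eq_iff)
      then show "(c, d) \<in> contract_orient v w P"
      proof
        assume h: "c = cm a \<and> d = cm b"
        then have "(a, b) \<in> P" using Pmem[of a b] ab cd by auto
        then show ?thesis using contract_I ab(2) h unfolding cm_def by blast
      next
        assume h: "c = cm b \<and> d = cm a"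
        have ab2: "{b, a} \<in> E" "{b, a} \<noteq> {v, w}" using ab by (auto simp: insert_commute)
        then have "(b, a) \<in> P" using Pmem[of b a] h cd by auto
        then show ?thesis using contract_I ab2(2) h unfolding cm_def by blast
      qed
    qed
  qed
  then show ?thesis using PA cA uP by blast
qed

end


context dctx
begin

theorem main_bij:
  "bij_betw (Theta V E v w) (kappa_classes V E)
     (kappa_classes V (E - {{v, w}}) <+> kappa_classes (contract_vertices V v w) (contract_edges E v w))"
proof -
  define K where "K = kappa_rel V E"
  define K1 where "K1 = kappa_rel V (E - {{v, w}})"
  define K2 where "K2 = kappa_rel (contract_vertices V v w) (contract_edges E v w)"
  define U where "U = {P \<in> Acyc E. usrc V P v}"
  define T where "T = kappa_classes V (E - {{v, w}}) <+> kappa_classes (contract_vertices V v w) (contract_edges E v w)"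
  define Phi where "Phi P = (if caseA v w P then Inr (K2 `` {contract_orient v w P})
      else Inl (K1 `` {delete_orient v w P}))" for P
  have eK: "equiv (Acyc E) K" unfolding K_def by (rule kappa_equiv[OF sg])
  have eK1: "equiv (Acyc (E - {{v, w}})) K1" unfolding K1_def by (rule kappa_equiv[OF sg1])
  have eK2: "equiv (Acyc (contract_edges E v w)) K2" unfolding K2_def by (rule kappa_equiv[OF sg2])
  have v2: "v \<in> contract_vertices V v w" unfolding V2_eq using vw by blast
  have T1: "kappa_classes V (E - {{v, w}}) = Acyc (E - {{v, w}}) // K1" unfolding kappa_classes_def K1_def ..
  have T2: "kappa_classes (contract_vertices V v w) (contract_edges E v w) = Acyc (contract_edges E v w) // K2"
    unfolding kappa_classes_def K2_def ..
  have kc: "kappa_class V E P = K `` {P}" for P unfolding kappa_class_def K_def ..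
  have kc1: "kappa_class V (E - {{v, w}}) P = K1 `` {P}" for P unfolding kappa_class_def K1_def ..
  have kc2: "kappa_class (contract_vertices V v w) (contract_edges E v w) P = K2 `` {P}" for P
    unfolding kappa_class_def K2_def ..

  have b1: "bij_betw (kappa_class V E) U (kappa_classes V E)"
    unfolding bij_betw_def
  proof
    show "inj_on (kappa_class V E) U"
    proof (rule inj_onI)
      fix P1 P2 assume h: "P1 \<in> U" "P2 \<in> U" "kappa_class V E P1 = kappa_class V E P2"
      have A: "P1 \<in> Acyc E" "P2 \<in> Acyc E" "usrc V P1 v" "usrc V P2 v" using h unfolding U_def by auto
      have "(P1, P2) \<in> K" using eq_equiv_class_iff[OF eK A(1) A(2)] h(3) unfolding kc by blast
      then show "P1 = P2" using uniq_kappa[OF sg _ A(3) A(4)] unfolding K_def by blast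
    qed
    show "kappa_class V E ` U = kappa_classes V E"
    proof
      show "kappa_class V E ` U \<subseteq> kappa_classes V E"
      proof
        fix X assume "X \<in> kappa_class V E ` U"
        then obtain P where P: "P \<in> U" "X = K `` {P}" unfolding kc by blast
        then have "P \<in> Acyc E" unfolding U_def by blast
        then show "X \<in> kappa_classes V E" unfolding kappa_classes_def K_def[symmetric] P(2)
          by (rule quotientI)
      qed
      show "kappa_classes V E \<subseteq> kappa_class V E ` U"
      proof
        fix X assume "X \<in> kappa_classes V E"
        then have "X \<in> Acyc E // K" unfolding kappa_classes_def K_def .
        then obtain Q where Q: "X = K `` {Q}" "Q \<in> Acyc E" by (rule quotientE)
        obtain P where P: "P \<in> Acyc E" "(Q, P) \<in> K" "usrc V P v"
          using exist_kappa[OF sg cg vw(2) Q(2)] unfolding K_def by blast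
        have "K `` {Q} = K `` {P}" using equiv_class_eq[OF eK P(2)] .
        then have "X = kappa_class V E P" using Q(1) unfolding kc by simp
        moreover have "P \<in> U" unfolding U_def using P by blast
        ultimately show "X \<in> kappa_class V E ` U" by blast
      qed
    qed
  qed

  have b2: "bij_betw Phi U T"
    unfolding bij_betw_def
  proof
    show "inj_on Phi U"
    proof (rule inj_onI)
      fix P1 P2 assume h: "P1 \<in> U" "P2 \<in> U" "Phi P1 = Phi P2"
      have A: "P1 \<in> Acyc E" "P2 \<in> Acyc E" "usrc V P1 v" "usrc V P2 v" using h unfolding U_def by auto
      have sv: "is_source P1 v" "is_source P2 v" using A unfolding usrc_def by auto
      show "P1 = P2"
      proof (cases "caseA v w P1")
        case c1: True
        have c2: "caseA v w P2"
        proof (rule ccontr)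
          assume "\<not> caseA v w P2"
          then show False using h(3) c1 unfolding Phi_def by simp
        qed
        have eq: "K2 `` {contract_orient v w P1} = K2 `` {contract_orient v w P2}"
          using h(3) c1 c2 unfolding Phi_def by simp
        have "(contract_orient v w P1, contract_orient v w P2) \<in> K2"
          using eq_equiv_class_iff[OF eK2 contract_Acyc[OF A(1) c1] contract_Acyc[OF A(2) c2]] eq by blast
        then have "contract_orient v w P1 = contract_orient v w P2"
          using uniq_kappa[OF sg2 _ usrc_contract[OF A(1) c1 A(3)] usrc_contract[OF A(2) c2 A(4)]]
          unfolding K2_def by blast
        then show ?thesis by (rule contract_inj[OF A(1) c1 A(2) c2])
      next
        case c1: False
        have c2: "\<not> caseA v w P2"
        proof
          assume "caseA v w P2"
          then show False using h(3) c1 unfolding Phi_def by simp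
        qed
        have eq: "K1 `` {delete_orient v w P1} = K1 `` {delete_orient v w P2}"
          using h(3) c1 c2 unfolding Phi_def by simp
        have "(delete_orient v w P1, delete_orient v w P2) \<in> K1"
          using eq_equiv_class_iff[OF eK1 del_Acyc[OF A(1)] del_Acyc[OF A(2)]] eq by blast
        then have "delete_orient v w P1 = delete_orient v w P2"
          using uniq_kappa[OF sg1 _ usrc_del[OF A(1) A(3) c1] usrc_del[OF A(2) A(4) c2]]
          unfolding K1_def by blast
        then show ?thesis using ins_del[OF A(1) sv(1)] ins_del[OF A(2) sv(2)] by metis
      qed
    qed
    show "Phi ` U = T"
    proof
      show "Phi ` U \<subseteq> T"
      proof
        fix X assume "X \<in> Phi ` U"
        then obtain P where P: "P \<in> U" "X = Phi P" by blast
        have PA: "P \<in> Acyc E" using P unfolding U_def by blast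
        show "X \<in> T"
        proof (cases "caseA v w P")
          case True
          have "K2 `` {contract_orient v w P} \<in> Acyc (contract_edges E v w) // K2"
            by (rule quotientI[OF contract_Acyc[OF PA True]])
          then show ?thesis unfolding T_def T2 P(2) Phi_def using True by (simp add: InrI)
        next
          case False
          have "K1 `` {delete_orient v w P} \<in> Acyc (E - {{v, w}}) // K1"
            by (rule quotientI[OF del_Acyc[OF PA]])
          then show ?thesis unfolding T_def T1 P(2) Phi_def using False by (simp add: InlI)
        qed
      qed
      show "T \<subseteq> Phi ` U"
      proof
        fix X assume "X \<in> T"
        then have "X \<in> Acyc (E - {{v, w}}) // K1 <+> Acyc (contract_edges E v w) // K2"
          unfolding T_def T1 T2 .
        then show "X \<in> Phi ` U"
        proof (rule PlusE)
          fix X1 assume X: "X = Inl X1" and X1: "X1 \<in> Acyc (E - {{v, w}}) // K1"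
          obtain Q where Q: "X1 = K1 `` {Q}" "Q \<in> Acyc (E - {{v, w}})" using X1 by (rule quotientE)
          obtain Q' where Q': "Q' \<in> Acyc (E - {{v, w}})" "(Q, Q') \<in> K1" "usrc V Q' v"
            using exist_kappa[OF sg1 cg1 vw(2) Q(2)] unfolding K1_def by blast
          have X1': "X1 = K1 `` {Q'}" using Q(1) equiv_class_eq[OF eK1 Q'(2)] by simp
          note L = del_lift[OF Q'(1) Q'(3)]
          have "insert (v, w) Q' \<in> U" unfolding U_def using L by blast
          moreover have "Phi (insert (v, w) Q') = X" unfolding Phi_def using L X X1' by simp
          ultimately show ?thesis by blast
        next
          fix X2 assume X: "X = Inr X2" and X2: "X2 \<in> Acyc (contract_edges E v w) // K2"
          obtain R where R: "X2 = K2 `` {R}" "R \<in> Acyc (contract_edges E v w)" using X2 by (rule quotientE)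
          obtain R' where R': "R' \<in> Acyc (contract_edges E v w)" "(R, R') \<in> K2" "usrc (contract_vertices V v w) R' v"
            using exist_kappa[OF sg2 cg2 v2 R(2)] unfolding K2_def by blast
          have X2': "X2 = K2 `` {R'}" using R(1) equiv_class_eq[OF eK2 R'(2)] by simp
          obtain P where P: "P \<in> Acyc E" "caseA v w P" "usrc V P v" "contract_orient v w P = R'"
            using contract_lift[OF R'(1) R'(3)] by blast
          have "P \<in> U" unfolding U_def using P by blast
          moreover have "Phi P = X" unfolding Phi_def using P X X2' by simp
          ultimately show ?thesis by blast
        qed
      qed
    qed
  qed

  have b3: "Theta V E v w (kappa_class V E P) = Phi P" if PU: "P \<in> U" for P
  proof -
    have PA: "P \<in> Acyc E" and u: "usrc V P v" using PU unfolding U_def by auto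
    define C where "C = kappa_class V E P"
    have CK: "C = K `` {P}" unfolding C_def kc ..
    have PC: "P \<in> C" unfolding CK using equiv_class_self[OF eK PA] .
    have key: "caseA v w P \<and> K2 `` {contract_orient v w (perm_orient E \<pi>)} = K2 `` {contract_orient v w P}"
      if st: "starts_vw V v w \<pi>" and inC: "perm_orient E \<pi> \<in> C" for \<pi>
    proof -
      define O1 where "O1 = perm_orient E \<pi>"
      have OA: "O1 \<in> Acyc E" and cO: "caseA v w O1" using perm_caseA[OF st] unfolding O1_def by auto
      have PO: "(P, O1) \<in> K" using inC unfolding O1_def CK by blast
      obtain P' where P': "(O1, P') \<in> (clickS V E (V - {v}))\<^sup>*" "usrc V P' v"
        using exists_usrc[OF sg cg vw(2) OA] by blast
      have OP': "(O1, P') \<in> K" unfolding K_def by (rule path_kappa[OF sg P'(1) OA]) blast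
      have "(P, P') \<in> K" using PO OP' eK unfolding equiv_def trans_def by blast
      then have PP': "P = P'" using uniq_kappa[OF sg _ u P'(2)] unfolding K_def by blast
      have np: "caseA v w P' \<and> (contract_orient v w O1, contract_orient v w P') \<in>
          (click_rel (contract_vertices V v w) (contract_edges E v w))\<^sup>*"
        using nv_path[OF P'(1) OA cO] .
      have cP: "caseA v w P" using np PP' by simp
      have "(contract_orient v w O1, contract_orient v w P) \<in> K2"
        unfolding K2_def kappa_rel_def using np PP' contract_Acyc[OF OA cO] contract_Acyc[OF PA cP] by simp
      then have "K2 `` {contract_orient v w O1} = K2 `` {contract_orient v w P}"
        by (rule equiv_class_eq[OF eK2])
      then show ?thesis using cP unfolding O1_def by simp
    qed
    show ?thesis
    proof (cases "caseA v w P")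
      case True
      obtain \<pi> where "starts_vw V v w \<pi>" "perm_orient E \<pi> = P" using caseA_perm[OF PA True] by blast
      then have ex: "\<exists>\<pi>. starts_vw V v w \<pi> \<and> perm_orient E \<pi> \<in> C" using PC by blast
      define \<pi>1 where "\<pi>1 = (SOME \<pi>. starts_vw V v w \<pi> \<and> perm_orient E \<pi> \<in> C)"
      have p1: "starts_vw V v w \<pi>1 \<and> perm_orient E \<pi>1 \<in> C" unfolding \<pi>1_def by (rule someI_ex[OF ex])
      have "Theta V E v w C = Inr (kappa_class (contract_vertices V v w) (contract_edges E v w)
          (contract_orient v w (perm_orient E \<pi>1)))"
        unfolding Theta_def \<pi>1_def using ex by simp
      also have "\<dots> = Inr (K2 `` {contract_orient v w P})" unfolding kc2 using key p1 by blast
      also have "\<dots> = Phi P" unfolding Phi_def using True by simp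
      finally show ?thesis unfolding C_def .
    next
      case False
      have nex: "\<not> (\<exists>\<pi>. starts_vw V v w \<pi> \<and> perm_orient E \<pi> \<in> C)" using key False by blast
      define O0 where "O0 = (SOME Ori. Ori \<in> C)"
      have O0C: "O0 \<in> C" unfolding O0_def using PC by (rule someI)
      have "(P, O0) \<in> K" using O0C unfolding CK by blast
      then have "(delete_orient v w P, delete_orient v w O0) \<in> K1" unfolding K_def K1_def by (rule del_kappa)
      then have eqc: "K1 `` {delete_orient v w P} = K1 `` {delete_orient v w O0}" by (rule equiv_class_eq[OF eK1])
      have "Theta V E v w C = Inl (kappa_class V (E - {{v, w}}) (delete_orient v w O0))"
        unfolding Theta_def O0_def using nex by simp
      also have "\<dots> = Phi P" unfolding Phi_def kc1 using False eqc by simp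
      finally show ?thesis unfolding C_def .
    qed
  qed

  have "bij_betw (Theta V E v w \<circ> kappa_class V E) U T"
    using b2 bij_betw_cong[of U "Theta V E v w \<circ> kappa_class V E" Phi T] b3 by simp
  then have "bij_betw (Theta V E v w) (kappa_classes V E) T"
    using bij_betw_comp_iff[OF b1] by blast
  then show ?thesis unfolding T_def .
qed

end

theorem theorem2:
  fixes V :: "'a set" and E :: "'a set set" and v w :: 'a
  assumes "simple_graph V E"
    and "connected_graph V E"
    and "cycle_edge E {v, w}"
  shows "bij_betw (Theta V E v w) (kappa_classes V E)
           (kappa_classes V (E - {{v, w}}) <+>
            kappa_classes (contract_vertices V v w) (contract_edges E v w))"
proof -
  interpret dctx V E v w using assms by unfold_locales
  show ?thesis by (rule main_bij)
qed

end
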